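(* The monoid $\mathcal{BR}(\mathcal{B}r_n)$ is generated by $d_1,\ldots,d_{n-1}$, $e_1,\ldots,e_{n-1}$ and $z_1,\ldots,z_{n-1}$.
   Context: $\mathfrak{C}_n$ is the partition monoid: set partitions of $[2n]$ (top points $1..n$, bottom $n+1..2n$) with concatenation product $*$ (identify bottom point $n+i$ of the first with top point $i$ of the second, join blocks transitively, delete middle points). $I\preceq J$ means each block of $J$ is a union of blocks of $I$. The Brauer monoid $\mathcal{B}r_n$ is the submonoid of set partitions all of whose blocks have exactly two elements; it contains $\mathfrak{S}_n$ (blocks $\{i,n+j\}$), with simple transpositions $s_i$, identity $1=\{\{i,n+i\}\}$, and $t_i$ = the partition with blocks $\{i,i+1\}$, $\{n+i,n+i+1\}$ and $\{j,n+j\}$ for $j\ne i,i+1$. A set partition $J$ of $[2n]$ is boxed if $1\preceq J$ and $J$ restricted to $[n]$ has interval blocks. $\mathcal{BR}(\mathcal{B}r_n)$ is the monoid of pairs $(I,J)$ with $I\in\mathcal{B}r_n$, $J$ boxed, $I\preceq J$, with product $(I,J)(H,K)=(I*H,J*K)$. $b_i$ merges the blocks $\{i,n+i\}$ and $\{i+1,n+i+1\}$ of $1$; $e_i=(1,b_i)$, $z_i=(s_i,b_i)$, $d_i=(t_i,b_i)$. *)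

theory Defs
  imports "HOL-Library.Disjoint_Sets"
begin

text \<open>Set partitions of [2n] = {1..2n}: top points 1..n, bottom points n+1..2n.\<close>

definition setpart :: "nat \<Rightarrow> nat set set \<Rightarrow> bool" where
  "setpart n P \<longleftrightarrow> partition_on {1..2*n} P"

text \<open>Concatenation product. Points of the diagram stack are pairs (level, index):
  level 0 = top of the first factor, level 1 = middle, level 2 = bottom of the second.\<close>

definition mapI :: "nat \<Rightarrow> nat \<Rightarrow> nat \<times> nat" where
  "mapI n x = (if x \<le> n then (0, x) else (1, x - n))"

definition mapJ :: "nat \<Rightarrow> nat \<Rightarrow> nat \<times> nat" where
  "mapJ n x = (if x \<le> n then (1, x) else (2, x - n))"

definition stack_edges :: "nat \<Rightarrow> nat set set \<Rightarrow> nat set set \<Rightarrow> ((nat \<times> nat) \<times> (nat \<times> nat)) set" where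
  "stack_edges n I J =
     {(mapI n a, mapI n b) | a b B. B \<in> I \<and> a \<in> B \<and> b \<in> B}
   \<union> {(mapJ n a, mapJ n b) | a b B. B \<in> J \<and> a \<in> B \<and> b \<in> B}"

definition outer :: "nat \<Rightarrow> (nat \<times> nat) set" where
  "outer n = {(0, i) | i. i \<in> {1..n}} \<union> {(2, i) | i. i \<in> {1..n}}"

definition unmap :: "nat \<Rightarrow> nat \<times> nat \<Rightarrow> nat" where
  "unmap n p = (if fst p = 0 then snd p else n + snd p)"

definition pmult :: "nat \<Rightarrow> nat set set \<Rightarrow> nat set set \<Rightarrow> nat set set" where
  "pmult n I J =
     {unmap n ` {y \<in> outer n. (x, y) \<in> (stack_edges n I J)\<^sup>*} | x. x \<in> outer n}"

definition prefines :: "nat set set \<Rightarrow> nat set set \<Rightarrow> bool" where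
  "prefines I J \<longleftrightarrow> (\<forall>B\<in>J. \<exists>S\<subseteq>I. B = \<Union>S)"

definition brauer :: "nat \<Rightarrow> nat set set \<Rightarrow> bool" where
  "brauer n I \<longleftrightarrow> setpart n I \<and> (\<forall>B\<in>I. card B = 2)"

definition idp :: "nat \<Rightarrow> nat set set" where
  "idp n = {{j, n + j} | j. j \<in> {1..n}}"

definition idrest :: "nat \<Rightarrow> nat \<Rightarrow> nat set set" where
  "idrest n i = {{j, n + j} | j. j \<in> {1..n} \<and> j \<noteq> i \<and> j \<noteq> i + 1}"

definition sgen :: "nat \<Rightarrow> nat \<Rightarrow> nat set set" where
  "sgen n i = idrest n i \<union> {{i, n + (i + 1)}, {i + 1, n + i}}"

definition tgen :: "nat \<Rightarrow> nat \<Rightarrow> nat set set" where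
  "tgen n i = idrest n i \<union> {{i, i + 1}, {n + i, n + (i + 1)}}"

definition bgen :: "nat \<Rightarrow> nat \<Rightarrow> nat set set" where
  "bgen n i = idrest n i \<union> {{i, i + 1, n + i, n + (i + 1)}}"

definition boxed :: "nat \<Rightarrow> nat set set \<Rightarrow> bool" where
  "boxed n J \<longleftrightarrow> setpart n J \<and> prefines (idp n) J
     \<and> (\<forall>B\<in>J. \<exists>a b. B \<inter> {1..n} = {a..b})"

definition BR :: "nat \<Rightarrow> (nat set set \<times> nat set set) set" where
  "BR n = {(I, J). brauer n I \<and> boxed n J \<and> prefines I J}"

definition brmult :: "nat \<Rightarrow> nat set set \<times> nat set set \<Rightarrow> nat set set \<times> nat set set
    \<Rightarrow> nat set set \<times> nat set set" where
  "brmult n x y = (pmult n (fst x) (fst y), pmult n (snd x) (snd y))"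

definition egen :: "nat \<Rightarrow> nat \<Rightarrow> nat set set \<times> nat set set" where
  "egen n i = (idp n, bgen n i)"
definition zgen :: "nat \<Rightarrow> nat \<Rightarrow> nat set set \<times> nat set set" where
  "zgen n i = (sgen n i, bgen n i)"
definition dgen :: "nat \<Rightarrow> nat \<Rightarrow> nat set set \<times> nat set set" where
  "dgen n i = (tgen n i, bgen n i)"

inductive_set gen_monoid :: "nat \<Rightarrow> (nat set set \<times> nat set set) set
    \<Rightarrow> (nat set set \<times> nat set set) set" for n G where
  unit: "(idp n, idp n) \<in> gen_monoid n G"
| step: "x \<in> gen_monoid n G \<Longrightarrow> g \<in> G \<Longrightarrow> brmult n x g \<in> gen_monoid n G"

definition BR_gens :: "nat \<Rightarrow> (nat set set \<times> nat set set) set" where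
  "BR_gens n = {dgen n i | i. 1 \<le> i \<and> i \<le> n - 1}
             \<union> {egen n i | i. 1 \<le> i \<and> i \<le> n - 1}
             \<union> {zgen n i | i. 1 \<le> i \<and> i \<le> n - 1}"

end

theory Submission
  imports Defs
begin

lemma E_sym: "(u,v) \<in> stack_edges n I K \<Longrightarrow> (v,u) \<in> stack_edges n I K"
  unfolding stack_edges_def by blast

lemma Estar_sym: "(u,v) \<in> (stack_edges n I K)\<^sup>* \<Longrightarrow> (v,u) \<in> (stack_edges n I K)\<^sup>*"
proof (induction rule: rtrancl_induct)
  case base then show ?case by simp
next
  case (step y z) then show ?case
    by (meson E_sym converse_rtrancl_into_rtrancl)
qed

lemma EI: "B \<in> I \<Longrightarrow> a \<in> B \<Longrightarrow> b \<in> B \<Longrightarrow> (mapI n a, mapI n b) \<in> (stack_edges n I K)\<^sup>*"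
  unfolding stack_edges_def by blast

lemma EJ: "B \<in> K \<Longrightarrow> a \<in> B \<Longrightarrow> b \<in> B \<Longrightarrow> (mapJ n a, mapJ n b) \<in> (stack_edges n I K)\<^sup>*"
  unfolding stack_edges_def by blast

lemma lab_inv:
  assumes L1: "\<forall>B\<in>I. \<forall>a\<in>B. \<forall>b\<in>B. lab (mapI n a) = lab (mapI n b)"
  and L2: "\<forall>B\<in>K. \<forall>a\<in>B. \<forall>b\<in>B. lab (mapJ n a) = lab (mapJ n b)"
  and "(x,y) \<in> (stack_edges n I K)\<^sup>*"
  shows "lab x = lab y"
  using assms(3)
proof (induction rule: rtrancl_induct)
  case base then show ?case by simp
next
  case (step y z)
  from step(2) have "lab y = lab z"
    unfolding stack_edges_def using L1 L2 by blast
  then show ?case using step by simp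
qed

lemma unmap_outer: "x \<in> outer n \<Longrightarrow> unmap n x \<in> {1..2*n}"
  unfolding outer_def unmap_def by auto

lemma outer_of: "z \<in> {1..2*n} \<Longrightarrow> \<exists>y\<in>outer n. unmap n y = z"
proof -
  assume z: "z \<in> {1..2*n}"
  show ?thesis
  proof (cases "z \<le> n")
    case True then show ?thesis using z
      by (intro bexI[of _ "(0,z)"]) (auto simp: outer_def unmap_def)
  next
    case False then show ?thesis using z
      by (intro bexI[of _ "(2,z-n)"]) (auto simp: outer_def unmap_def)
  qed
qed

lemma pmult_char:
  assumes eq: "equiv {1..2*n} R"
  and L1: "\<forall>B\<in>I. \<forall>a\<in>B. \<forall>b\<in>B. lab (mapI n a) = lab (mapI n b)"
  and L2: "\<forall>B\<in>K. \<forall>a\<in>B. \<forall>b\<in>B. lab (mapJ n a) = lab (mapJ n b)"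
  and L3: "\<forall>x\<in>outer n. lab x = R``{unmap n x}"
  and L4: "\<forall>x\<in>outer n. \<forall>y\<in>outer n. (unmap n x, unmap n y) \<in> R \<longrightarrow> (x,y) \<in> (stack_edges n I K)\<^sup>*"
  shows "pmult n I K = {1..2*n} // R"
proof -
  have key: "unmap n ` {y \<in> outer n. (x, y) \<in> (stack_edges n I K)\<^sup>*} = R``{unmap n x}"
    if x: "x \<in> outer n" for x
  proof -
    have "{y \<in> outer n. (x, y) \<in> (stack_edges n I K)\<^sup>*} = {y \<in> outer n. (unmap n x, unmap n y) \<in> R}"
    proof (intro Collect_cong conj_cong refl iffI)
      fix y assume y: "y \<in> outer n" and "(x, y) \<in> (stack_edges n I K)\<^sup>*"
      then have "lab x = lab y" using lab_inv[OF L1 L2] by blast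
      then have "R``{unmap n x} = R``{unmap n y}" using L3 x y by simp
      then show "(unmap n x, unmap n y) \<in> R"
        using eq_equiv_class_iff[OF eq] unmap_outer x y by blast
    next
      fix y assume "y \<in> outer n" "(unmap n x, unmap n y) \<in> R"
      then show "(x, y) \<in> (stack_edges n I K)\<^sup>*" using L4 x by blast
    qed
    also have "unmap n ` \<dots> = R``{unmap n x}"
    proof
      show "unmap n ` {y \<in> outer n. (unmap n x, unmap n y) \<in> R} \<subseteq> R `` {unmap n x}" by auto
      show "R `` {unmap n x} \<subseteq> unmap n ` {y \<in> outer n. (unmap n x, unmap n y) \<in> R}"
      proof
        fix z assume "z \<in> R `` {unmap n x}"
        then have "z \<in> {1..2*n}" "(unmap n x, z) \<in> R" using equiv_type[OF eq] by auto
        then show "z \<in> unmap n ` {y \<in> outer n. (unmap n x, unmap n y) \<in> R}"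
          using outer_of by force
      qed
    qed
    finally show ?thesis .
  qed
  have "pmult n I K = {R``{unmap n x} | x. x \<in> outer n}"
    unfolding pmult_def using key by (metis (no_types, lifting))
  also have "\<dots> = {1..2*n} // R"
    unfolding quotient_def using unmap_outer outer_of by blast
  finally show ?thesis .
qed

definition Inv :: "nat \<Rightarrow> (nat \<Rightarrow> nat) \<Rightarrow> bool" where
  "Inv n p \<longleftrightarrow> (\<forall>x\<in>{1..2*n}. p x \<in> {1..2*n} \<and> p x \<noteq> x \<and> p (p x) = x)"

definition Rp :: "nat \<Rightarrow> (nat \<Rightarrow> nat) \<Rightarrow> (nat \<times> nat) set" where
  "Rp n p = {(x,y). x \<in> {1..2*n} \<and> y \<in> {1..2*n} \<and> (y = x \<or> y = p x)}"

definition rr :: "nat \<Rightarrow> nat \<Rightarrow> nat" where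
  "rr n x = (if x \<le> n then x else x - n)"

definition Rb :: "nat \<Rightarrow> nat set \<Rightarrow> (nat \<times> nat) set" where
  "Rb n S = {(x,y). x \<in> {1..2*n} \<and> y \<in> {1..2*n} \<and>
      (\<forall>k. min (rr n x) (rr n y) \<le> k \<and> k < max (rr n x) (rr n y) \<longrightarrow> k \<in> S)}"

definition part :: "nat \<Rightarrow> (nat \<times> nat) set \<Rightarrow> nat set set" where
  "part n R = {1..2*n} // R"

lemma equiv_Rp: "Inv n p \<Longrightarrow> equiv {1..2*n} (Rp n p)"
  unfolding Inv_def Rp_def equiv_def refl_on_def sym_def trans_def by auto

lemma Rp_class: "Inv n p \<Longrightarrow> x \<in> {1..2*n} \<Longrightarrow> Rp n p `` {x} = {x, p x}"
  unfolding Inv_def Rp_def by auto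

lemma part_Rp: "Inv n p \<Longrightarrow> part n (Rp n p) = {{x, p x} | x. x \<in> {1..2*n}}"
  unfolding part_def quotient_def using Rp_class by fastforce

lemma minmax_aux: "min (a::nat) c \<le> k \<and> k < max a c \<Longrightarrow>
   (min a b \<le> k \<and> k < max a b) \<or> (min b c \<le> k \<and> k < max b c)"
  by (cases "a \<le> b"; cases "b \<le> c"; cases "a \<le> c") (auto simp add: min_def max_def)

lemma equiv_Rb: "equiv {1..2*n} (Rb n S)"
  unfolding equiv_def refl_on_def sym_def trans_def
proof (intro conjI allI impI)
  show "Rb n S \<subseteq> {1..2 * n} \<times> {1..2 * n}" unfolding Rb_def by auto
  show "\<forall>x\<in>{1..2 * n}. (x, x) \<in> Rb n S" unfolding Rb_def by auto
  fix x y assume "(x, y) \<in> Rb n S" then show "(y, x) \<in> Rb n S"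
    unfolding Rb_def by (auto simp: min.commute max.commute)
next
  fix x y z assume a: "(x, y) \<in> Rb n S" "(y, z) \<in> Rb n S"
  have r1: "x \<in> {1..2*n}" "z \<in> {1..2*n}" using a unfolding Rb_def by auto
  have r2: "\<forall>k. min (rr n x) (rr n z) \<le> k \<and> k < max (rr n x) (rr n z) \<longrightarrow> k \<in> S"
  proof (intro allI impI)
    fix k assume k: "min (rr n x) (rr n z) \<le> k \<and> k < max (rr n x) (rr n z)"
    have "(min (rr n x) (rr n y) \<le> k \<and> k < max (rr n x) (rr n y)) \<or>
          (min (rr n y) (rr n z) \<le> k \<and> k < max (rr n y) (rr n z))"
      using k minmax_aux by blast
    then show "k \<in> S" using a unfolding Rb_def by blast
  qed
  show "(x, z) \<in> Rb n S" using r1 r2 unfolding Rb_def by blast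
qed

lemma prefines_quot:
  assumes e1: "equiv A R1" and e2: "equiv A R2"
  shows "prefines (A//R1) (A//R2) \<longleftrightarrow> R1 \<subseteq> R2"
proof
  assume R: "R1 \<subseteq> R2"
  show "prefines (A//R1) (A//R2)" unfolding prefines_def
  proof
    fix B assume "B \<in> A//R2"
    then obtain z where z: "z \<in> A" "B = R2``{z}" by (auto elim: quotientE)
    let ?S = "{C \<in> A//R1. C \<subseteq> B}"
    have "B = \<Union>?S"
    proof
      show "\<Union>?S \<subseteq> B" by auto
      show "B \<subseteq> \<Union>?S"
      proof
        fix y assume y: "y \<in> B"
        have zy: "(z,y) \<in> R2" using y z by simp
        then have yA: "y \<in> A" using equiv_type[OF e2] by blast
        have "R1``{y} \<subseteq> R2``{y}" using R by blast
        also have "R2``{y} = B" using equiv_class_eq[OF e2 zy] z(2) by simp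
        finally have "R1``{y} \<in> ?S" using quotientI[OF yA, of R1] by simp
        moreover have "y \<in> R1``{y}" using equiv_class_self[OF e1 yA] .
        ultimately show "y \<in> \<Union>?S" by blast
      qed
    qed
    moreover have "?S \<subseteq> A // R1" by blast
    ultimately show "\<exists>S\<subseteq>A // R1. B = \<Union> S" by blast
  qed
next
  assume P: "prefines (A//R1) (A//R2)"
  show "R1 \<subseteq> R2"
  proof
    fix q assume q: "q \<in> R1"
    obtain x y where xy: "q = (x,y)" by force
    have xA: "x \<in> A" "y \<in> A" using q xy equiv_type[OF e1] by auto
    have "R2``{x} \<in> A//R2" using quotientI[OF xA(1)] .
    then obtain S where S: "S \<subseteq> A//R1" "R2``{x} = \<Union>S" using P unfolding prefines_def by blast
    have "x \<in> R2``{x}" using equiv_class_self[OF e2 xA(1)] .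
    then obtain C where C: "C \<in> S" "x \<in> C" using S by auto
    have "C \<in> A//R1" using S C by blast
    then obtain w where w: "w \<in> A" "C = R1``{w}" by (rule quotientE) blast
    then have "(w,x) \<in> R1" using C by auto
    then have "C = R1``{x}" using w(2) equiv_class_eq[OF e1] by simp
    then have "y \<in> C" using q xy by auto
    then have "y \<in> R2``{x}" using S C by auto
    then show "q \<in> R2" using xy by auto
  qed
qed

lemma brauer_char: "brauer n I \<longleftrightarrow> (\<exists>p. Inv n p \<and> I = part n (Rp n p))"
proof
  assume "\<exists>p. Inv n p \<and> I = part n (Rp n p)"
  then obtain p where p: "Inv n p" "I = part n (Rp n p)" by blast
  have "setpart n I" unfolding setpart_def p(2) part_def
    by (rule partition_on_quotient[OF equiv_Rp[OF p(1)]])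
  moreover have "\<forall>B\<in>I. card B = 2"
  proof
    fix B assume "B \<in> I"
    then obtain x where x: "x \<in> {1..2*n}" "B = {x, p x}" using p part_Rp[OF p(1)] by auto
    then have "p x \<noteq> x" using p(1) unfolding Inv_def by blast
    then show "card B = 2" using x by simp
  qed
  ultimately show "brauer n I" unfolding brauer_def by blast
next
  assume b: "brauer n I"
  then have P: "partition_on {1..2*n} I" and c: "\<forall>B\<in>I. card B = 2"
    unfolding brauer_def setpart_def by auto
  define p where "p x = (SOME y. y \<noteq> x \<and> {x,y} \<in> I)" for x
  have ex: "\<exists>y. y \<noteq> x \<and> {x,y} \<in> I" if x: "x \<in> {1..2*n}" for x
  proof -
    have "x \<in> \<Union>I" using P x unfolding partition_on_def by blast
    then obtain B where B: "B \<in> I" "x \<in> B" by blast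
    then have "card B = 2" using c by blast
    then obtain u v where uv: "B = {u,v}" "u \<noteq> v" unfolding card_2_iff by blast
    show ?thesis
    proof (cases "x = u")
      case True then show ?thesis using B uv by (intro exI[of _ v]) simp
    next
      case False then have "x = v" using B uv by simp
      then show ?thesis using B uv by (intro exI[of _ u]) (simp add: insert_commute)
    qed
  qed
  have pp: "p x \<noteq> x \<and> {x, p x} \<in> I" if "x \<in> {1..2*n}" for x
    unfolding p_def using someI_ex[OF ex[OF that]] .
  have uniq: "B = C" if "B \<in> I" "C \<in> I" "z \<in> B" "z \<in> C" for B C z
  proof (rule ccontr)
    assume "B \<noteq> C"
    then have "B \<inter> C = {}" using disjointD[OF partition_onD2[OF P]] that(1,2) by blast
    then show False using that(3,4) by blast
  qed
  have inA: "B \<subseteq> {1..2*n}" if "B \<in> I" for B using P that unfolding partition_on_def by blast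
  have inv: "Inv n p" unfolding Inv_def
  proof
    fix x assume x: "x \<in> {1..2*n}"
    have px: "p x \<in> {1..2*n}" using pp[OF x] inA by blast
    have "{p x, p (p x)} = {x, p x}" using uniq[of "{p x, p (p x)}" "{x, p x}" "p x"] pp[OF x] pp[OF px] by simp
    then have "p (p x) = x" using pp[OF px] by (simp add: doubleton_eq_iff)
    then show "p x \<in> {1..2 * n} \<and> p x \<noteq> x \<and> p (p x) = x" using px pp[OF x] by blast
  qed
  have "I = {{x, p x} | x. x \<in> {1..2*n}}"
  proof
    show "{{x, p x} |x. x \<in> {1..2 * n}} \<subseteq> I" using pp by auto
    show "I \<subseteq> {{x, p x} |x. x \<in> {1..2 * n}}"
    proof
      fix B assume B: "B \<in> I"
      have "B \<noteq> {}" using P B unfolding partition_on_def by blast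
      then obtain x where x: "x \<in> B" by blast
      then have xA: "x \<in> {1..2*n}" using inA B by blast
      then have "B = {x, p x}" using uniq[OF B conjunct2[OF pp[OF xA]] x] by simp
      then show "B \<in> {{x, p x} |x. x \<in> {1..2 * n}}" using xA by blast
    qed
  qed
  then have "I = part n (Rp n p)" using part_Rp[OF inv] by simp
  then show "\<exists>p. Inv n p \<and> I = part n (Rp n p)" using inv by blast
qed

lemma rr_range: "x \<in> {1..2*n} \<Longrightarrow> rr n x \<in> {1..n}"
  unfolding rr_def by auto

lemma rr_top[simp]: "x \<le> n \<Longrightarrow> rr n x = x"
  unfolding rr_def by auto

lemma rr_bot[simp]: "rr n (n + j) = (if j = 0 then n else j)"
  unfolding rr_def by auto

lemma Rb_rr: "x \<in> {1..2*n} \<Longrightarrow> (x, rr n x) \<in> Rb n S"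
proof -
  assume x: "x \<in> {1..2*n}"
  have "rr n x \<in> {1..n}" using rr_range[OF x] .
  moreover have "rr n (rr n x) = rr n x" using calculation by simp
  ultimately show ?thesis using x unfolding Rb_def by auto
qed

lemma Rb_mono: "S \<subseteq> T \<Longrightarrow> Rb n S \<subseteq> Rb n T"
  unfolding Rb_def by blast

lemma Rb_top: "j \<in> {1..n} \<Longrightarrow> j' \<in> {1..n} \<Longrightarrow>
   (j, j') \<in> Rb n S \<longleftrightarrow> (\<forall>k. min j j' \<le> k \<and> k < max j j' \<longrightarrow> k \<in> S)"
  unfolding Rb_def by auto

lemma Rb_iff_rr: "(x, y) \<in> Rb n S \<longleftrightarrow> x \<in> {1..2*n} \<and> y \<in> {1..2*n} \<and> (rr n x, rr n y) \<in> Rb n S"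
proof -
  have h: "rr n x \<in> {1..2*n} \<and> rr n (rr n x) = rr n x" if "x \<in> {1..2*n}" for x
    using rr_range[OF that] by auto
  show ?thesis
  proof (cases "x \<in> {1..2*n} \<and> y \<in> {1..2*n}")
    case True
    then show ?thesis using h[of x] h[of y] unfolding Rb_def by auto
  next
    case False then show ?thesis unfolding Rb_def by blast
  qed
qed

lemma Rb_empty_class: "z \<in> {1..2*n} \<Longrightarrow> Rb n {} `` {z} = {rr n z, n + rr n z}"
proof -
  assume z: "z \<in> {1..2*n}"
  have r: "rr n z \<in> {1..n}" using rr_range[OF z] .
  have "y \<in> Rb n {} `` {z} \<longleftrightarrow> y \<in> {1..2*n} \<and> rr n y = rr n z" for y
  proof
    assume "y \<in> Rb n {} `` {z}"
    then have a: "(z, y) \<in> Rb n {}" by simp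
    then have y: "y \<in> {1..2*n}" unfolding Rb_def by blast
    from a have H: "\<forall>k. min (rr n z) (rr n y) \<le> k \<and> k < max (rr n z) (rr n y) \<longrightarrow> k \<in> {}"
      unfolding Rb_def by blast
    have "\<not> (min (rr n z) (rr n y) < max (rr n z) (rr n y))"
      using H[rule_format, of "min (rr n z) (rr n y)"] by blast
    then have "rr n y = rr n z" by (simp add: min_def max_def split: if_splits)
    then show "y \<in> {1..2*n} \<and> rr n y = rr n z" using y by blast
  next
    assume a: "y \<in> {1..2*n} \<and> rr n y = rr n z"
    then have "\<forall>k. min (rr n z) (rr n y) \<le> k \<and> k < max (rr n z) (rr n y) \<longrightarrow> k \<in> {}"
      by simp
    then have "(z, y) \<in> Rb n {}" using a z unfolding Rb_def by blast
    then show "y \<in> Rb n {} `` {z}" by simp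
  qed
  moreover have "y \<in> {1..2*n} \<and> rr n y = rr n z \<longleftrightarrow> y = rr n z \<or> y = n + rr n z" for y
    using r unfolding rr_def by auto
  ultimately show ?thesis by auto
qed

lemma quotient_img: "A // r = (\<lambda>x. r``{x}) ` A"
  unfolding quotient_def by blast

lemma idp_img: "idp n = (\<lambda>j. {j, n + j}) ` {1..n}"
  unfolding idp_def by blast

lemma rr_img: "rr n ` {1..2*n} = {1..n}"
proof
  show "rr n ` {1..2*n} \<subseteq> {1..n}" using rr_range by blast
  show "{1..n} \<subseteq> rr n ` {1..2*n}"
  proof
    fix j assume j: "j \<in> {1..n}"
    then have rj: "rr n j = j" and jr: "j \<in> {1..2*n}" by auto
    have "rr n j \<in> rr n ` {1..2*n}" using jr by (rule imageI)
    then show "j \<in> rr n ` {1..2*n}" using rj by simp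
  qed
qed

lemma idp_Rb: "idp n = part n (Rb n {})"
proof -
  have "part n (Rb n {}) = (\<lambda>z. Rb n {} `` {z}) ` {1..2*n}" unfolding part_def quotient_img ..
  also have "\<dots> = (\<lambda>z. {rr n z, n + rr n z}) ` {1..2*n}"
    by (rule image_cong[OF refl]) (rule Rb_empty_class)
  also have "\<dots> = (\<lambda>j. {j, n + j}) ` (rr n ` {1..2*n})" by (simp add: image_comp o_def)
  also have "\<dots> = idp n" unfolding rr_img idp_img ..
  finally show ?thesis by simp
qed

definition pid :: "nat \<Rightarrow> nat \<Rightarrow> nat" where
  "pid n x = (if x \<le> n then x + n else x - n)"

lemma Inv_pid2: "Inv n (pid n)"
  unfolding Inv_def pid_def by auto

lemma idp_Rp: "idp n = part n (Rp n (pid n))"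
proof -
  have "part n (Rp n (pid n)) = (\<lambda>z. Rp n (pid n) `` {z}) ` {1..2*n}" unfolding part_def quotient_img ..
  also have "\<dots> = (\<lambda>z. {z, pid n z}) ` {1..2*n}"
    by (rule image_cong[OF refl]) (rule Rp_class[OF Inv_pid2])
  also have "\<dots> = (\<lambda>j. {j, n + j}) ` {1..n}"
  proof
    show "(\<lambda>z. {z, pid n z}) ` {1..2*n} \<subseteq> (\<lambda>j. {j, n + j}) ` {1..n}"
    proof
      fix B assume "B \<in> (\<lambda>z. {z, pid n z}) ` {1..2*n}"
      then obtain z where z: "z \<in> {1..2*n}" "B = {z, pid n z}" by blast
      show "B \<in> (\<lambda>j. {j, n + j}) ` {1..n}"
      proof (cases "z \<le> n")
        case True
        then have "B = {z, n + z}" using z unfolding pid_def by (simp add: add.commute)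
        moreover have "z \<in> {1..n}" using z True by simp
        ultimately show ?thesis by blast
      next
        case False
        then have "B = {z - n, n + (z - n)}" using z unfolding pid_def by (simp add: insert_commute)
        moreover have "z - n \<in> {1..n}" using z False by auto
        ultimately show ?thesis by blast
      qed
    qed
    show "(\<lambda>j. {j, n + j}) ` {1..n} \<subseteq> (\<lambda>z. {z, pid n z}) ` {1..2*n}"
    proof
      fix B assume "B \<in> (\<lambda>j. {j, n + j}) ` {1..n}"
      then obtain j where j: "j \<in> {1..n}" "B = {j, n + j}" by blast
      then have pj: "pid n j = n + j" and jr: "j \<in> {1..2*n}" unfolding pid_def by auto
      have "{j, pid n j} \<in> (\<lambda>z. {z, pid n z}) ` {1..2*n}" using jr by (rule imageI)
      then show "B \<in> (\<lambda>z. {z, pid n z}) ` {1..2*n}" using j(2) pj by simp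
    qed
  qed
  also have "\<dots> = idp n" unfolding idp_img ..
  finally show ?thesis by simp
qed

lemma chain_rel:
  assumes tr: "trans R" and st: "\<forall>k. j \<le> k \<and> k < j' \<longrightarrow> (k, Suc k) \<in> R"
    and rf: "(j, j) \<in> R" and le: "j \<le> j'"
  shows "(j, j') \<in> R"
  using le st
proof (induction j')
  case 0 then show ?case using rf by simp
next
  case (Suc m)
  show ?case
  proof (cases "j = Suc m")
    case True then show ?thesis using rf by simp
  next
    case False
    then have "j \<le> m" using Suc by simp
    then have "(j, m) \<in> R" using Suc by simp
    moreover have "(m, Suc m) \<in> R" using Suc \<open>j \<le> m\<close> by simp
    ultimately show ?thesis using tr unfolding trans_def by blast
  qed
qed

lemma Rb_class_top: "z \<in> {1..2*n} \<Longrightarrow> j \<in> Rb n S `` {z} \<inter> {1..n} \<longleftrightarrow> j \<in> {1..n} \<and> (rr n z, j) \<in> Rb n S"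
proof -
  assume z: "z \<in> {1..2*n}"
  have "j \<in> {1..n} \<Longrightarrow> rr n j = j" by simp
  then show ?thesis using z Rb_iff_rr[of z j n S] Rb_iff_rr[of "rr n z" j n S] rr_range[OF z]
    by (auto simp del: rr_top)
qed

lemma boxed_part: "boxed n (part n (Rb n S))"
  unfolding boxed_def
proof (intro conjI)
  show "setpart n (part n (Rb n S))" unfolding setpart_def part_def
    by (rule partition_on_quotient[OF equiv_Rb])
  show "prefines (idp n) (part n (Rb n S))" unfolding idp_Rb part_def
    using prefines_quot[OF equiv_Rb equiv_Rb] Rb_mono[of "{}" S n] by blast
  show "\<forall>B\<in>part n (Rb n S). \<exists>a b. B \<inter> {1..n} = {a..b}"
  proof
    fix B assume "B \<in> part n (Rb n S)"
    then obtain z where z: "z \<in> {1..2*n}" "B = Rb n S `` {z}" unfolding part_def by (auto elim: quotientE)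
    define T where "T = B \<inter> {1..n}"
    have Tc: "j \<in> T \<longleftrightarrow> j \<in> {1..n} \<and> (rr n z, j) \<in> Rb n S" for j
      unfolding T_def z(2) using Rb_class_top[OF z(1)] by blast
    have rz: "rr n z \<in> {1..n}" using rr_range[OF z(1)] .
    have "rr n z \<in> T" using Tc rz equiv_Rb[of n S] unfolding equiv_def refl_on_def by auto
    then have ne: "T \<noteq> {}" by blast
    have fin: "finite T" unfolding T_def by simp
    define a where "a = Min T"
    define b where "b = Max T"
    have aT: "a \<in> T" unfolding a_def using fin ne by simp
    have bT: "b \<in> T" unfolding b_def using fin ne by simp
    have "T = {a..b}"
    proof
      show "T \<subseteq> {a..b}" unfolding a_def b_def using fin by auto
      show "{a..b} \<subseteq> T"
      proof
        fix j assume j: "j \<in> {a..b}"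
        have ab: "a \<in> {1..n}" "b \<in> {1..n}" "(rr n z, a) \<in> Rb n S" "(rr n z, b) \<in> Rb n S"
          using aT bT Tc by auto
        have "(a, b) \<in> Rb n S" using ab equiv_Rb[of n S] unfolding equiv_def sym_def trans_def by blast
        then have H: "\<forall>k. a \<le> k \<and> k < b \<longrightarrow> k \<in> S" using Rb_top[OF ab(1,2)] j by auto
        have jn: "j \<in> {1..n}" using j ab by auto
        have "(a, j) \<in> Rb n S" using Rb_top[OF ab(1) jn] H j by auto
        then have "(rr n z, j) \<in> Rb n S" using ab equiv_Rb[of n S] unfolding equiv_def trans_def by blast
        then show "j \<in> T" using Tc jn by blast
      qed
    qed
    then show "\<exists>a b. B \<inter> {1..n} = {a..b}" unfolding T_def by blast
  qed
qed

lemma boxed_char: "boxed n J \<longleftrightarrow> (\<exists>S. S \<subseteq> {1..<n} \<and> J = part n (Rb n S))"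
proof
  assume "\<exists>S. S \<subseteq> {1..<n} \<and> J = part n (Rb n S)"
  then show "boxed n J" using boxed_part by blast
next
  assume bx: "boxed n J"
  then have P: "partition_on {1..2*n} J" and pre: "prefines (idp n) J"
    and iv: "\<forall>B\<in>J. \<exists>a b. B \<inter> {1..n} = {a..b}"
    unfolding boxed_def setpart_def by auto
  define RJ where "RJ = {(x, y). \<exists>B\<in>J. x \<in> B \<and> y \<in> B}"
  have eqJ: "equiv {1..2*n} RJ" unfolding RJ_def by (rule equiv_partition_on[OF P])
  have Jq: "{1..2*n} // RJ = J" unfolding RJ_def by (rule partition_on_eq_quotient[OF P])
  have symJ: "sym RJ" and trJ: "trans RJ" and tyJ: "RJ \<subseteq> {1..2*n} \<times> {1..2*n}"
    and rfJ: "refl_on {1..2*n} RJ"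
    using eqJ unfolding equiv_def by auto
  define S where "S = {k. 1 \<le> k \<and> k < n \<and> (k, Suc k) \<in> RJ}"
  have xr: "(x, rr n x) \<in> RJ" if x: "x \<in> {1..2*n}" for x
  proof -
    have "x \<in> \<Union>J" using P x unfolding partition_on_def by blast
    then obtain B where B: "B \<in> J" "x \<in> B" by blast
    then obtain T where T: "T \<subseteq> idp n" "B = \<Union>T" using pre unfolding prefines_def by blast
    then obtain C where C: "C \<in> T" "x \<in> C" using B by blast
    then obtain j where j: "j \<in> {1..n}" "C = {j, n + j}" using T unfolding idp_def by blast
    have "rr n x = j" using C j by auto
    moreover have "j \<in> B" using C j T by blast
    ultimately show ?thesis unfolding RJ_def using B by blast
  qed
  have "RJ = Rb n S"
  proof
    show "RJ \<subseteq> Rb n S"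
    proof
      fix q assume q: "q \<in> RJ"
      obtain x y where xy: "q = (x, y)" by (cases q) blast
      have x: "x \<in> {1..2*n}" and y: "y \<in> {1..2*n}" using q xy tyJ by auto
      have "(rr n x, rr n y) \<in> RJ"
      proof -
        have "(rr n x, x) \<in> RJ" using xr[OF x] symJ unfolding sym_def by blast
        moreover have "(y, rr n y) \<in> RJ" using xr[OF y] .
        ultimately show ?thesis using q xy trJ unfolding trans_def by blast
      qed
      then obtain B where B: "B \<in> J" "rr n x \<in> B" "rr n y \<in> B" unfolding RJ_def by blast
      obtain a b where ab: "B \<inter> {1..n} = {a..b}" using iv B by blast
      have rx: "rr n x \<in> {a..b}" "rr n y \<in> {a..b}" using ab B rr_range[OF x] rr_range[OF y] by auto
      have "k \<in> S" if k: "min (rr n x) (rr n y) \<le> k" "k < max (rr n x) (rr n y)" for k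
      proof -
        have "k \<in> {a..b}" "Suc k \<in> {a..b}" using rx k by (auto simp: min_def max_def split: if_splits)
        then have "k \<in> B" "Suc k \<in> B" using ab by auto
        then have "(k, Suc k) \<in> RJ" unfolding RJ_def using B by blast
        moreover have "1 \<le> k" "k < n" using k rr_range[OF x] rr_range[OF y]
          by (auto simp: min_def max_def split: if_splits)
        ultimately show ?thesis unfolding S_def by blast
      qed
      then show "q \<in> Rb n S" using x y xy unfolding Rb_def by blast
    qed
    show "Rb n S \<subseteq> RJ"
    proof
      fix q assume q: "q \<in> Rb n S"
      obtain x y where xy: "q = (x, y)" by (cases q) blast
      have x: "x \<in> {1..2*n}" and y: "y \<in> {1..2*n}" and
        H: "\<forall>k. min (rr n x) (rr n y) \<le> k \<and> k < max (rr n x) (rr n y) \<longrightarrow> k \<in> S"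
        using q xy unfolding Rb_def by auto
      let ?a = "min (rr n x) (rr n y)" and ?b = "max (rr n x) (rr n y)"
      have a1: "?a \<in> {1..2*n}" using rr_range[OF x] rr_range[OF y] by (auto simp: min_def)
      have "(?a, ?b) \<in> RJ"
      proof (rule chain_rel[OF trJ])
        show "\<forall>k. ?a \<le> k \<and> k < ?b \<longrightarrow> (k, Suc k) \<in> RJ" using H unfolding S_def by blast
        show "(?a, ?a) \<in> RJ" using rfJ a1 unfolding refl_on_def by blast
        show "?a \<le> ?b" by simp
      qed
      then have "(rr n x, rr n y) \<in> RJ"
        using symJ unfolding sym_def by (cases "rr n x \<le> rr n y") (auto simp: min_def max_def)
      moreover have "(x, rr n x) \<in> RJ" using xr[OF x] .
      moreover have "(rr n y, y) \<in> RJ" using xr[OF y] symJ unfolding sym_def by blast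
      ultimately show "q \<in> RJ" using xy trJ unfolding trans_def by blast
    qed
  qed
  then have "J = part n (Rb n S)" using Jq unfolding part_def by simp
  moreover have "S \<subseteq> {1..<n}" unfolding S_def by auto
  ultimately show "\<exists>S. S \<subseteq> {1..<n} \<and> J = part n (Rb n S)" by blast
qed

lemma BR_char: "BR n = {(part n (Rp n p), part n (Rb n S)) | p S. Inv n p \<and> S \<subseteq> {1..<n} \<and> Rp n p \<subseteq> Rb n S}"
proof -
  have pq: "Inv n p \<Longrightarrow> prefines (part n (Rp n p)) (part n (Rb n S)) \<longleftrightarrow> Rp n p \<subseteq> Rb n S" for p S
    unfolding part_def using prefines_quot[OF equiv_Rp equiv_Rb] by blast
  show ?thesis unfolding BR_def brauer_char boxed_char using pq by blast
qed

lemma compat_iff: "Inv n p \<Longrightarrow> Rp n p \<subseteq> Rb n S \<longleftrightarrow> (\<forall>x\<in>{1..2*n}. (x, p x) \<in> Rb n S)"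
proof
  assume "Inv n p" "Rp n p \<subseteq> Rb n S"
  then show "\<forall>x\<in>{1..2*n}. (x, p x) \<in> Rb n S" unfolding Rp_def Inv_def by auto
next
  assume i: "Inv n p" and h: "\<forall>x\<in>{1..2*n}. (x, p x) \<in> Rb n S"
  show "Rp n p \<subseteq> Rb n S"
  proof
    fix q assume "q \<in> Rp n p"
    then obtain x y where q: "q = (x,y)" "x \<in> {1..2*n}" "y \<in> {1..2*n}" "y = x \<or> y = p x"
      unfolding Rp_def by blast
    have "(x, x) \<in> Rb n S" using q(2) equiv_Rb[of n S] unfolding equiv_def refl_on_def by blast
    then show "q \<in> Rb n S" using q h by auto
  qed
qed

lemma unmap_inj: "x \<in> outer n \<Longrightarrow> y \<in> outer n \<Longrightarrow> unmap n x = unmap n y \<Longrightarrow> x = y"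
  unfolding outer_def unmap_def by auto

lemma mapI_top[simp]: "x \<le> n \<Longrightarrow> mapI n x = (0, x)" unfolding mapI_def by simp
lemma mapI_bot[simp]: "n < x \<Longrightarrow> mapI n x = (1, x - n)" unfolding mapI_def by simp
lemma mapJ_top[simp]: "x \<le> n \<Longrightarrow> mapJ n x = (1, x)" unfolding mapJ_def by simp
lemma mapJ_bot[simp]: "n < x \<Longrightarrow> mapJ n x = (2, x - n)" unfolding mapJ_def by simp

lemma outer_cases: "x \<in> outer n \<Longrightarrow> (\<And>j. j \<in> {1..n} \<Longrightarrow> x = (0, j) \<Longrightarrow> P) \<Longrightarrow> (\<And>j. j \<in> {1..n} \<Longrightarrow> x = (2, j) \<Longrightarrow> P) \<Longrightarrow> P"
  unfolding outer_def by blast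

lemma unmap0[simp]: "unmap n (0, j) = j" unfolding unmap_def by simp
lemma unmap1[simp]: "unmap n (Suc 0, j) = n + j" unfolding unmap_def by simp
lemma unmap2[simp]: "unmap n (2, j) = n + j" unfolding unmap_def by simp

lemma part_Rp_block: "Inv n p \<Longrightarrow> x \<in> {1..2*n} \<Longrightarrow> {x, p x} \<in> part n (Rp n p)"
  using part_Rp by blast

lemma L1_Rp:
  assumes i: "Inv n p" and h: "\<forall>x\<in>{1..2*n}. g x = g (p x)"
  shows "\<forall>B\<in>part n (Rp n p). \<forall>a\<in>B. \<forall>b\<in>B. g a = g b"
proof (intro ballI)
  fix B a b assume B: "B \<in> part n (Rp n p)" and a: "a \<in> B" and b: "b \<in> B"
  obtain x where x: "x \<in> {1..2*n}" "B = {x, p x}" using B part_Rp[OF i] by blast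
  show "g a = g b" using a b x h by auto
qed

lemma Inv_conj:
  assumes i: "Inv n p" and T1: "\<forall>x\<in>{1..2*n}. \<tau> x \<in> {1..2*n} \<and> \<tau> (\<tau> x) = x"
  shows "Inv n (\<lambda>x. \<tau> (p (\<tau> x)))"
  unfolding Inv_def
proof
  fix x assume x: "x \<in> {1..2*n}"
  have tx: "\<tau> x \<in> {1..2*n}" using T1 x by blast
  have ptx: "p (\<tau> x) \<in> {1..2*n}" "p (\<tau> x) \<noteq> \<tau> x" "p (p (\<tau> x)) = \<tau> x" using i tx unfolding Inv_def by auto
  have a: "\<tau> (p (\<tau> x)) \<in> {1..2*n}" using T1 ptx by blast
  have b: "\<tau> (p (\<tau> x)) \<noteq> x" using T1 ptx x by metis
  have c: "\<tau> (\<tau> (p (\<tau> x))) = p (\<tau> x)" using T1 ptx by blast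
  show "\<tau> (p (\<tau> x)) \<in> {1..2 * n} \<and> \<tau> (p (\<tau> x)) \<noteq> x \<and> \<tau> (p (\<tau> (\<tau> (p (\<tau> x))))) = x"
    using a b c ptx T1 x by simp
qed

lemma M_perm:
  assumes i: "Inv n p"
    and T1: "\<forall>x\<in>{1..2*n}. \<tau> x \<in> {1..2*n} \<and> \<tau> (\<tau> x) = x"
    and T2: "\<forall>x. x \<le> n \<longrightarrow> \<tau> x = x"
    and T3: "\<forall>x\<in>{1..2*n}. n < x \<longrightarrow> n < \<tau> x"
  shows "pmult n (part n (Rp n p)) {{j, \<tau> (n + j)} | j. j \<in> {1..n}} = part n (Rp n (\<lambda>x. \<tau> (p (\<tau> x))))"
proof -
  define p' where "p' = (\<lambda>x. \<tau> (p (\<tau> x)))"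
  have i': "Inv n p'" unfolding p'_def by (rule Inv_conj[OF i T1])
  define K where "K = {{j, \<tau> (n + j)} | j. j \<in> {1..n}}"
  define f where "f (q::nat\<times>nat) = (if fst q = 0 then snd q else if fst q = 1 then \<tau> (n + snd q) else n + snd q)" for q
  define lab where "lab q = {f q, p' (f q)}" for q
  have labI: "lab (mapI n y) = {\<tau> y, \<tau> (p y)}" if y: "y \<in> {1..2*n}" for y
  proof (cases "y \<le> n")
    case True
    then have "f (mapI n y) = \<tau> y" using T2 unfolding f_def by simp
    moreover have "p' (\<tau> y) = \<tau> (p y)" unfolding p'_def using T1 y by simp
    ultimately show ?thesis unfolding lab_def by simp
  next
    case False
    then have "f (mapI n y) = \<tau> y" unfolding f_def by simp
    moreover have "p' (\<tau> y) = \<tau> (p y)" unfolding p'_def using T1 y by simp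
    ultimately show ?thesis unfolding lab_def by simp
  qed
  have L1: "\<forall>B\<in>part n (Rp n p). \<forall>a\<in>B. \<forall>b\<in>B. lab (mapI n a) = lab (mapI n b)"
  proof (rule L1_Rp[OF i], intro ballI)
    fix x assume x: "x \<in> {1..2*n}"
    have px: "p x \<in> {1..2*n}" "p (p x) = x" using i x unfolding Inv_def by auto
    show "lab (mapI n x) = lab (mapI n (p x))" using labI[OF x] labI[OF px(1)] px(2) by auto
  qed
  have L2: "\<forall>B\<in>K. \<forall>a\<in>B. \<forall>b\<in>B. lab (mapJ n a) = lab (mapJ n b)"
  proof (intro ballI)
    fix B a b assume B: "B \<in> K" and a: "a \<in> B" and b: "b \<in> B"
    obtain j where j: "j \<in> {1..n}" "B = {j, \<tau> (n + j)}" using B unfolding K_def by blast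
    have nj: "n + j \<in> {1..2*n}" "n < n + j" using j by auto
    have tj: "n < \<tau> (n + j)" using T3 nj by blast
    have "f (mapJ n j) = \<tau> (n + j)" using j unfolding f_def by simp
    moreover have "f (mapJ n (\<tau> (n + j))) = \<tau> (n + j)" using tj unfolding f_def by simp
    ultimately have "lab (mapJ n j) = lab (mapJ n (\<tau> (n + j)))" unfolding lab_def by simp
    then have eq: "lab (mapJ n j) = lab (mapJ n (\<tau> (n + j)))" .
    have ab: "(a = j \<or> a = \<tau> (n + j)) \<and> (b = j \<or> b = \<tau> (n + j))" using a b j(2) by blast
    then show "lab (mapJ n a) = lab (mapJ n b)" using eq by metis
  qed
  have L3: "\<forall>x\<in>outer n. lab x = Rp n p' `` {unmap n x}"
  proof
    fix x assume x: "x \<in> outer n"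
    have "f x = unmap n x" using x unfolding f_def outer_def unmap_def by auto
    then show "lab x = Rp n p' `` {unmap n x}" unfolding lab_def using Rp_class[OF i' unmap_outer[OF x]] by simp
  qed
  let ?E = "stack_edges n (part n (Rp n p)) K"
  have conn: "(x, mapI n (\<tau> (unmap n x))) \<in> ?E\<^sup>*" if x: "x \<in> outer n" for x
  proof (rule outer_cases[OF x])
    fix j assume j: "j \<in> {1..n}" "x = (0, j)"
    then show ?thesis using T2 by simp
  next
    fix j assume j: "j \<in> {1..n}" "x = (2, j)"
    have nj: "n + j \<in> {1..2*n}" "n < n + j" using j by auto
    define j' where "j' = \<tau> (n + j) - n"
    have tj: "n < \<tau> (n + j)" "\<tau> (n + j) \<in> {1..2*n}" using T3 T1 nj by auto
    then have j'r: "j' \<in> {1..n}" "\<tau> (n + j) = n + j'" unfolding j'_def by auto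
    have "\<tau> (n + j') = n + j" using T1 nj j'r by metis
    then have B: "{j', n + j} \<in> K" unfolding K_def using j'r by force
    have "(mapJ n j', mapJ n (n + j)) \<in> ?E\<^sup>*" by (rule EJ[OF B]) auto
    then have "((1, j'), (2, j)) \<in> ?E\<^sup>*" using j'r nj(2) by simp
    then have "((2, j), (1, j')) \<in> ?E\<^sup>*" by (rule Estar_sym)
    moreover have "mapI n (\<tau> (unmap n x)) = (1, j')" using j j'r by simp
    ultimately show ?thesis using j by simp
  qed
  have L4: "\<forall>x\<in>outer n. \<forall>y\<in>outer n. (unmap n x, unmap n y) \<in> Rp n p' \<longrightarrow> (x, y) \<in> ?E\<^sup>*"
  proof (intro ballI impI)
    fix x y assume x: "x \<in> outer n" and y: "y \<in> outer n" and r: "(unmap n x, unmap n y) \<in> Rp n p'"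
    have ux: "unmap n x \<in> {1..2*n}" using unmap_outer[OF x] .
    show "(x, y) \<in> ?E\<^sup>*"
    proof (cases "unmap n y = unmap n x")
      case True then show ?thesis using unmap_inj[OF x y] by simp
    next
      case False
      then have uy: "unmap n y = p' (unmap n x)" using r unfolding Rp_def by auto
      have tux: "\<tau> (unmap n x) \<in> {1..2*n}" using T1 ux by blast
      have "p (\<tau> (unmap n x)) \<in> {1..2*n}" using i tux unfolding Inv_def by blast
      then have eq: "p (\<tau> (unmap n x)) = \<tau> (unmap n y)" using uy T1 unfolding p'_def by simp
      have "(mapI n (\<tau> (unmap n x)), mapI n (p (\<tau> (unmap n x)))) \<in> ?E\<^sup>*"
        by (rule EI[OF part_Rp_block[OF i tux]]) auto
      then have m: "(mapI n (\<tau> (unmap n x)), mapI n (\<tau> (unmap n y))) \<in> ?E\<^sup>*" using eq by simp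
      have "(mapI n (\<tau> (unmap n y)), y) \<in> ?E\<^sup>*" using Estar_sym[OF conn[OF y]] .
      then show ?thesis using conn[OF x] m by (meson rtrancl_trans)
    qed
  qed
  have "pmult n (part n (Rp n p)) K = {1..2*n} // Rp n p'"
    by (rule pmult_char[OF equiv_Rp[OF i'] L1 L2 L3 L4])
  then show ?thesis unfolding K_def p'_def part_def by simp
qed

definition tm :: "nat \<Rightarrow> nat \<Rightarrow> (nat \<Rightarrow> nat) \<Rightarrow> nat \<Rightarrow> nat" where
  "tm n k p = (let a = p (n+k); b = p (n+Suc k) in
     if a = n + Suc k then p else p(n+k := n + Suc k, n + Suc k := n+k, a := b, b := a))"

lemma tm_facts:
  assumes i: "Inv n p" and k: "1 \<le> k" "k < n"
  defines "c \<equiv> n + k" and "d \<equiv> n + Suc k"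
  shows "c \<in> {1..2*n}" "d \<in> {1..2*n}" "tm n k p c = d" "tm n k p d = c"
    "p c = d \<Longrightarrow> tm n k p = p"
    "p c \<noteq> d \<Longrightarrow> tm n k p (p c) = p d \<and> tm n k p (p d) = p c"
    "p c \<noteq> d \<Longrightarrow> p c \<notin> {c, d} \<and> p d \<notin> {c, d} \<and> p c \<noteq> p d"
    "x \<notin> {c, d, p c, p d} \<Longrightarrow> tm n k p x = p x"
proof -
  show cr: "c \<in> {1..2*n}" and dr: "d \<in> {1..2*n}" unfolding c_def d_def using k by auto
  have pc: "p c \<in> {1..2*n}" "p c \<noteq> c" "p (p c) = c" using i cr unfolding Inv_def by auto
  have pd: "p d \<in> {1..2*n}" "p d \<noteq> d" "p (p d) = d" using i dr unfolding Inv_def by auto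
  have cd: "c \<noteq> d" unfolding c_def d_def by simp
  show "p c = d \<Longrightarrow> tm n k p = p" unfolding tm_def c_def d_def by simp
  show nd: "p c \<noteq> d \<Longrightarrow> p c \<notin> {c, d} \<and> p d \<notin> {c, d} \<and> p c \<noteq> p d"
  proof -
    assume A: "p c \<noteq> d"
    have 1: "p d \<noteq> c" using A pd(3) by metis
    have 2: "p c \<noteq> p d" using pc(3) pd(3) cd by metis
    show ?thesis using A 1 2 pc(2) pd(2) by auto
  qed
  show "tm n k p c = d"
  proof (cases "p c = d")
    case True then show ?thesis unfolding tm_def c_def d_def by simp
  next
    case False then show ?thesis using nd unfolding tm_def Let_def c_def[symmetric] d_def[symmetric] by auto
  qed
  show "tm n k p d = c"
  proof (cases "p c = d")
    case True then show ?thesis unfolding tm_def c_def d_def using pc c_def d_def by simp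
  next
    case False then show ?thesis using nd unfolding tm_def Let_def c_def[symmetric] d_def[symmetric] by auto
  qed
  show "p c \<noteq> d \<Longrightarrow> tm n k p (p c) = p d \<and> tm n k p (p d) = p c"
    using nd unfolding tm_def Let_def c_def[symmetric] d_def[symmetric] by auto
  show "x \<notin> {c, d, p c, p d} \<Longrightarrow> tm n k p x = p x"
    unfolding tm_def Let_def c_def[symmetric] d_def[symmetric] by auto
qed

lemma Inv_tm:
  assumes i: "Inv n p" and k: "1 \<le> k" "k < n"
  shows "Inv n (tm n k p)"
proof (cases "p (n+k) = n + Suc k")
  case True then show ?thesis using tm_facts(5)[OF i k] i by simp
next
  case False
  note F = tm_facts[OF i k]
  let ?c = "n + k" and ?d = "n + Suc k" and ?q = "tm n k p"
  show ?thesis unfolding Inv_def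
  proof
    fix x assume x: "x \<in> {1..2*n}"
    have px: "p x \<in> {1..2*n}" "p x \<noteq> x" "p (p x) = x" using i x unfolding Inv_def by auto
    have pc: "p ?c \<in> {1..2*n}" "p (p ?c) = ?c" using i F(1) unfolding Inv_def by auto
    have pd: "p ?d \<in> {1..2*n}" "p (p ?d) = ?d" using i F(2) unfolding Inv_def by auto
    have nd: "p ?c \<notin> {?c, ?d} \<and> p ?d \<notin> {?c, ?d} \<and> p ?c \<noteq> p ?d" using F(7) False .
    consider "x = ?c" | "x = ?d" | "x = p ?c" | "x = p ?d" | "x \<notin> {?c, ?d, p ?c, p ?d}" by blast
    then show "?q x \<in> {1..2 * n} \<and> ?q x \<noteq> x \<and> ?q (?q x) = x"
    proof cases
      case 1 then show ?thesis using F(1-4) by simp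
    next
      case 2 then show ?thesis using F(1-4) by simp
    next
      case 3 then show ?thesis using F(6)[OF False] pd nd by auto
    next
      case 4 then show ?thesis using F(6)[OF False] pc nd by auto
    next
      case 5
      then have "p x \<notin> {?c, ?d, p ?c, p ?d}" using px pc pd by auto
      then show ?thesis using F(8)[OF 5] F(8) px by simp
    qed
  qed
qed

lemma M_tm:
  assumes i: "Inv n p" and k: "1 \<le> k" "k < n"
  shows "pmult n (part n (Rp n p)) (tgen n k) = part n (Rp n (tm n k p))"
proof -
  note F = tm_facts[OF i k]
  define c where "c = n + k"
  define d where "d = n + Suc k"
  define a where "a = p c"
  define b where "b = p d"
  define p' where "p' = tm n k p"
  have i': "Inv n p'" unfolding p'_def by (rule Inv_tm[OF i k])
  have cr: "c \<in> {1..2*n}" "n < c" and dr: "d \<in> {1..2*n}" "n < d" unfolding c_def d_def using k by auto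
  have mc: "mapI n c = (1, k)" and md: "mapI n d = (1, Suc k)" unfolding c_def d_def using k by simp_all
  have pc: "a \<in> {1..2*n}" "a \<noteq> c" "p a = c" using i cr unfolding Inv_def a_def by auto
  have pd: "b \<in> {1..2*n}" "b \<noteq> d" "p b = d" using i dr unfolding Inv_def b_def by auto
  have p'c: "p' c = d" and p'd: "p' d = c" unfolding p'_def c_def d_def using F(3,4) by simp_all
  have p'o: "p' x = p x" if "x \<notin> {c, d, a, b}" for x
    unfolding p'_def a_def b_def c_def d_def using F(8) that unfolding c_def d_def a_def b_def by simp
  have deg: "p' = p" if "a = d" using that F(5) unfolding p'_def a_def c_def d_def by simp
  have ndg: "p' a = b \<and> p' b = a \<and> a \<notin> {c, d} \<and> b \<notin> {c, d} \<and> a \<noteq> b" if "a \<noteq> d"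
    using that F(6,7) unfolding p'_def a_def b_def c_def d_def by simp
  have degb: "b = c" if "a = d" using that pc(3) unfolding b_def by simp
  define lab where "lab q = (if q = (1, k) \<or> q = (1, Suc k) then {a, b} else {unmap n q, p' (unmap n q)})" for q
  have labI: "lab (mapI n y) = (if y = c \<or> y = d then {a, b} else {y, p' y})" if y: "y \<in> {1..2*n}" for y
  proof (cases "y \<le> n")
    case True
    then show ?thesis unfolding lab_def using cr dr by auto
  next
    case False
    then have "mapI n y = (1, y - n)" by simp
    moreover have "(1::nat, y - n) = (1, k) \<longleftrightarrow> y = c" "(1::nat, y - n) = (1, Suc k) \<longleftrightarrow> y = d"
      using False unfolding c_def d_def by auto
    moreover have "unmap n (1, y - n) = y" using False by simp
    ultimately show ?thesis unfolding lab_def by simp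
  qed
  have L1: "\<forall>B\<in>part n (Rp n p). \<forall>u\<in>B. \<forall>v\<in>B. lab (mapI n u) = lab (mapI n v)"
  proof (rule L1_Rp[OF i], intro ballI)
    fix x assume x: "x \<in> {1..2*n}"
    have px: "p x \<in> {1..2*n}" "p (p x) = x" using i x unfolding Inv_def by auto
    show "lab (mapI n x) = lab (mapI n (p x))"
    proof (cases "a = d")
      case True
      then have e: "p' = p" "b = c" using deg degb by auto
      have "p c = d" "p d = c" using True e pc pd unfolding a_def b_def by auto
      then show ?thesis unfolding labI[OF x] labI[OF px(1)] using e True px(2) by auto
    next
      case False
      note N = ndg[OF False]
      consider "x = c" | "x = d" | "x = a" | "x = b" | "x \<notin> {c, d, a, b}" by blast
      then show ?thesis
      proof cases
        case 1 then show ?thesis unfolding labI[OF x] labI[OF px(1)] using N unfolding a_def by auto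
      next
        case 2 then show ?thesis unfolding labI[OF x] labI[OF px(1)] using N unfolding b_def by auto
      next
        case 3 then show ?thesis unfolding labI[OF x] labI[OF px(1)] using N pc by auto
      next
        case 4 then show ?thesis unfolding labI[OF x] labI[OF px(1)] using N pd by auto
      next
        case 5
        then have "p x \<notin> {c, d, a, b}" using px pc pd unfolding a_def b_def by auto
        then show ?thesis unfolding labI[OF x] labI[OF px(1)] using 5 p'o px(2) by auto
      qed
    qed
  qed
  have L2: "\<forall>B\<in>tgen n k. \<forall>u\<in>B. \<forall>v\<in>B. lab (mapJ n u) = lab (mapJ n v)"
  proof (intro ballI)
    fix B u v assume B: "B \<in> tgen n k" and u: "u \<in> B" and v: "v \<in> B"
    have "\<exists>L. \<forall>w\<in>B. lab (mapJ n w) = L"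
    proof -
      consider (r) j where "j \<in> {1..n}" "j \<noteq> k" "j \<noteq> k + 1" "B = {j, n + j}"
        | (t) "B = {k, k + 1}" | (bt) "B = {n + k, n + (k + 1)}"
        using B unfolding tgen_def idrest_def by blast
      then show ?thesis
      proof cases
        case r
        then have "lab (mapJ n j) = {n + j, p' (n + j)}" "lab (mapJ n (n + j)) = {n + j, p' (n + j)}"
          unfolding lab_def by auto
        then show ?thesis using r(4) by auto
      next
        case t
        then have "lab (mapJ n k) = {a, b}" "lab (mapJ n (k + 1)) = {a, b}" unfolding lab_def using k by auto
        then show ?thesis using t by auto
      next
        case bt
        have "lab (mapJ n (n + k)) = {c, d}" using p'c k unfolding lab_def c_def d_def by auto
        moreover have "lab (mapJ n (n + (k + 1))) = {c, d}" using p'd k unfolding lab_def c_def d_def by auto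
        ultimately show ?thesis using bt by auto
      qed
    qed
    then show "lab (mapJ n u) = lab (mapJ n v)" using u v by metis
  qed
  have L3: "\<forall>x\<in>outer n. lab x = Rp n p' `` {unmap n x}"
  proof
    fix x assume x: "x \<in> outer n"
    have "x \<noteq> (1, k) \<and> x \<noteq> (1, Suc k)" using x unfolding outer_def by auto
    then show "lab x = Rp n p' `` {unmap n x}" unfolding lab_def using Rp_class[OF i' unmap_outer[OF x]] by simp
  qed
  let ?E = "stack_edges n (part n (Rp n p)) (tgen n k)"
  have conn: "(x, mapI n (unmap n x)) \<in> ?E\<^sup>*" if x: "x \<in> outer n" "unmap n x \<notin> {c, d}" for x
  proof (rule outer_cases[OF x(1)])
    fix j assume j: "j \<in> {1..n}" "x = (0, j)"
    then show ?thesis by simp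
  next
    fix j assume j: "j \<in> {1..n}" "x = (2, j)"
    then have jk: "j \<noteq> k" "j \<noteq> k + 1" using x(2) unfolding c_def d_def by auto
    then have B: "{j, n + j} \<in> tgen n k" using j unfolding tgen_def idrest_def by blast
    have "(mapJ n j, mapJ n (n + j)) \<in> ?E\<^sup>*" by (rule EJ[OF B]) auto
    then have "((1, j), (2, j)) \<in> ?E\<^sup>*" using j by simp
    then show ?thesis using j Estar_sym by simp
  qed
  have edgeI: "(mapI n u, mapI n (p u)) \<in> ?E\<^sup>*" if "u \<in> {1..2*n}" for u
    by (rule EI[OF part_Rp_block[OF i that]]) auto
  have cdE: "((2, k), (2, Suc k)) \<in> ?E\<^sup>*"
  proof -
    have B: "{n + k, n + (k + 1)} \<in> tgen n k" unfolding tgen_def by blast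
    have "(mapJ n (n + k), mapJ n (n + (k + 1))) \<in> ?E\<^sup>*" by (rule EJ[OF B]) auto
    then show ?thesis using k by simp
  qed
  have midE: "((1, k), (1, Suc k)) \<in> ?E\<^sup>*"
  proof -
    have B: "{k, k + 1} \<in> tgen n k" unfolding tgen_def by blast
    have "(mapJ n k, mapJ n (k + 1)) \<in> ?E\<^sup>*" by (rule EJ[OF B]) auto
    then show ?thesis using k by simp
  qed
  have abE: "(x, y) \<in> ?E\<^sup>*" if x: "x \<in> outer n" and y: "y \<in> outer n"
    and ux: "unmap n x = a" and uy: "unmap n y = b" and nd: "a \<noteq> d" for x y
  proof -
    note N = ndg[OF nd]
    have "(x, mapI n a) \<in> ?E\<^sup>*" using conn[OF x] ux N by simp
    moreover have "(mapI n a, mapI n c) \<in> ?E\<^sup>*" using edgeI[OF pc(1)] pc(3) by simp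
    moreover have "(mapI n c, mapI n d) \<in> ?E\<^sup>*" using midE mc md by simp
    moreover have "(mapI n d, mapI n b) \<in> ?E\<^sup>*" using edgeI[OF dr(1)] unfolding b_def by simp
    moreover have "(mapI n b, y) \<in> ?E\<^sup>*" using Estar_sym[OF conn[OF y]] uy N by simp
    ultimately show ?thesis by (meson rtrancl_trans)
  qed
  have L4: "\<forall>x\<in>outer n. \<forall>y\<in>outer n. (unmap n x, unmap n y) \<in> Rp n p' \<longrightarrow> (x, y) \<in> ?E\<^sup>*"
  proof (intro ballI impI)
    fix x y assume x: "x \<in> outer n" and y: "y \<in> outer n" and r: "(unmap n x, unmap n y) \<in> Rp n p'"
    have ux: "unmap n x \<in> {1..2*n}" using unmap_outer[OF x] .
    show "(x, y) \<in> ?E\<^sup>*"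
    proof (cases "unmap n y = unmap n x")
      case True then show ?thesis using unmap_inj[OF x y] by simp
    next
      case False
      then have uy: "unmap n y = p' (unmap n x)" using r unfolding Rp_def by auto
      have xc: "x = (2, k)" if "unmap n x = c" using x that k unfolding outer_def c_def by auto
      have xd: "x = (2, Suc k)" if "unmap n x = d" using x that k unfolding outer_def d_def by auto
      have yc: "y = (2, k)" if "unmap n y = c" using y that k unfolding outer_def c_def by auto
      have yd: "y = (2, Suc k)" if "unmap n y = d" using y that k unfolding outer_def d_def by auto
      consider "unmap n x = c" | "unmap n x = d" | "a \<noteq> d" "unmap n x = a" | "a \<noteq> d" "unmap n x = b"
        | "unmap n x \<notin> {c, d}" "a = d \<or> unmap n x \<notin> {a, b}" by blast
      then show ?thesis
      proof cases
        case 1 then show ?thesis using xc yd uy p'c cdE by simp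
      next
        case 2 then show ?thesis using xd yc uy p'd cdE Estar_sym by simp
      next
        case 3 then show ?thesis using abE[OF x y] uy ndg by simp
      next
        case 4 then show ?thesis using abE[OF y x] uy ndg Estar_sym by simp
      next
        case 5
        have pux: "p' (unmap n x) = p (unmap n x)"
        proof (cases "a = d")
          case True then show ?thesis using deg by simp
        next
          case False then show ?thesis using 5 p'o by simp
        qed
        have "p (unmap n x) \<notin> {c, d}"
        proof
          assume "p (unmap n x) \<in> {c, d}"
          then have "unmap n x \<in> {a, b}" using i ux unfolding Inv_def a_def b_def by auto
          then show False using 5 degb by auto
        qed
        then have uyn: "unmap n y \<notin> {c, d}" using uy pux by simp
        have "(x, mapI n (unmap n x)) \<in> ?E\<^sup>*" using conn[OF x] 5 by simp
        moreover have "(mapI n (unmap n x), mapI n (unmap n y)) \<in> ?E\<^sup>*" using edgeI[OF ux] uy pux by simp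
        moreover have "(mapI n (unmap n y), y) \<in> ?E\<^sup>*" using Estar_sym[OF conn[OF y uyn]] .
        ultimately show ?thesis by (meson rtrancl_trans)
      qed
    qed
  qed
  have "pmult n (part n (Rp n p)) (tgen n k) = {1..2*n} // Rp n p'"
    by (rule pmult_char[OF equiv_Rp[OF i'] L1 L2 L3 L4])
  then show ?thesis unfolding p'_def part_def by simp
qed

lemma Rb_step: "k \<in> S \<Longrightarrow> 1 \<le> k \<Longrightarrow> k < n \<Longrightarrow> (n + k, n + Suc k) \<in> Rb n S"
proof -
  assume a: "k \<in> S" "1 \<le> k" "k < n"
  have r: "rr n (n + k) = k" "rr n (n + Suc k) = Suc k" using a unfolding rr_def by auto
  have m: "min k (Suc k) = k" "max k (Suc k) = Suc k" by simp_all
  have "\<forall>j. min (rr n (n + k)) (rr n (n + Suc k)) \<le> j \<and> j < max (rr n (n + k)) (rr n (n + Suc k)) \<longrightarrow> j \<in> S"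
    unfolding r m
  proof (intro allI impI)
    fix j assume "k \<le> j \<and> j < Suc k"
    then have "j = k" by linarith
    then show "j \<in> S" using a by simp
  qed
  then show ?thesis unfolding Rb_def using a by auto
qed

definition tau :: "nat \<Rightarrow> nat \<Rightarrow> nat \<Rightarrow> nat" where
  "tau n k x = (if x = n + k then n + Suc k else if x = n + Suc k then n + k else x)"

definition sw :: "nat \<Rightarrow> nat \<Rightarrow> (nat \<Rightarrow> nat) \<Rightarrow> nat \<Rightarrow> nat" where
  "sw n k p = (\<lambda>x. tau n k (p (tau n k x)))"

lemma tau_props:
  assumes k: "1 \<le> k" "k < n"
  shows "\<forall>x\<in>{1..2*n}. tau n k x \<in> {1..2*n} \<and> tau n k (tau n k x) = x"
    "\<forall>x. x \<le> n \<longrightarrow> tau n k x = x"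
    "\<forall>x\<in>{1..2*n}. n < x \<longrightarrow> n < tau n k x"
  using k unfolding tau_def by auto

lemma tau_tau[simp]: "tau n k (tau n k x) = x"
  unfolding tau_def by auto

lemma M_idp:
  assumes i: "Inv n p"
  shows "pmult n (part n (Rp n p)) (idp n) = part n (Rp n p)"
proof -
  have "pmult n (part n (Rp n p)) {{j, (\<lambda>x. x) (n + j)} | j. j \<in> {1..n}} = part n (Rp n (\<lambda>x. (\<lambda>x. x) (p ((\<lambda>x. x) x))))"
    by (rule M_perm[OF i]) auto
  moreover have "{{j, (\<lambda>x. x) (n + j)} | j. j \<in> {1..n}} = idp n" unfolding idp_def by simp
  ultimately show ?thesis by simp
qed

lemma memK: "j \<in> A \<Longrightarrow> B = {j, f j} \<Longrightarrow> B \<in> {{j, f j} | j. j \<in> A}"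
  by blast

lemma sgen_K:
  assumes k: "1 \<le> k" "k < n"
  shows "sgen n k = {{j, tau n k (n + j)} | j. j \<in> {1..n}}"
proof
  show "sgen n k \<subseteq> {{j, tau n k (n + j)} |j. j \<in> {1..n}}"
  proof
    fix B assume B: "B \<in> sgen n k"
    have "B \<in> idrest n k \<or> B = {k, n + (k + 1)} \<or> B = {k + 1, n + k}" using B unfolding sgen_def by (simp only: Un_iff insert_iff empty_iff) blast
    then consider (r) j where "j \<in> {1..n}" "j \<noteq> k" "j \<noteq> k + 1" "B = {j, n + j}"
      | (a) "B = {k, n + (k + 1)}" | (b) "B = {k + 1, n + k}"
      unfolding idrest_def by blast
    then show "B \<in> {{j, tau n k (n + j)} |j. j \<in> {1..n}}"
    proof cases
      case r then have "tau n k (n + j) = n + j" unfolding tau_def by auto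
      then show ?thesis using r by (intro memK[of j]) simp_all
    next
      case a then have "tau n k (n + k) = n + (k + 1)" "k \<in> {1..n}" using k unfolding tau_def by auto
      then show ?thesis using a by (intro memK[of k]) simp_all
    next
      case b then have "tau n k (n + (k + 1)) = n + k" "k + 1 \<in> {1..n}" using k unfolding tau_def by auto
      then show ?thesis using b by (intro memK[of "k + 1"]) simp_all
    qed
  qed
  show "{{j, tau n k (n + j)} |j. j \<in> {1..n}} \<subseteq> sgen n k"
  proof
    fix B assume "B \<in> {{j, tau n k (n + j)} |j. j \<in> {1..n}}"
    then obtain j where j: "j \<in> {1..n}" "B = {j, tau n k (n + j)}" by blast
    consider "j = k" | "j = k + 1" | "j \<noteq> k" "j \<noteq> k + 1" by blast
    then show "B \<in> sgen n k"
    proof cases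
      case 1
      have "tau n k (n + k) = n + (k + 1)" unfolding tau_def by simp
      then have "B = {k, n + (k + 1)}" using j 1 by simp
      then show ?thesis unfolding sgen_def by simp
    next
      case 2
      have "tau n k (n + (k + 1)) = n + k" unfolding tau_def by simp
      then have "B = {k + 1, n + k}" using j 2 by simp
      then show ?thesis unfolding sgen_def by simp
    next
      case 3
      have "tau n k (n + j) = n + j" using 3 unfolding tau_def by simp
      then have "B = {j, n + j}" using j by simp
      then have "B \<in> idrest n k" unfolding idrest_def using 3 j by blast
      then show ?thesis unfolding sgen_def by simp
    qed
  qed
qed

lemma M_sgen:
  assumes i: "Inv n p" and k: "1 \<le> k" "k < n"
  shows "pmult n (part n (Rp n p)) (sgen n k) = part n (Rp n (sw n k p))"
  unfolding sgen_K[OF k] sw_def using M_perm[OF i tau_props[OF k]] .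

lemma Inv_sw: "Inv n p \<Longrightarrow> 1 \<le> k \<Longrightarrow> k < n \<Longrightarrow> Inv n (sw n k p)"
  unfolding sw_def by (rule Inv_conj) (use tau_props in auto)

lemma part_Rb_block: "(u, v) \<in> Rb n S \<Longrightarrow> \<exists>B\<in>part n (Rb n S). u \<in> B \<and> v \<in> B"
proof -
  assume uv: "(u, v) \<in> Rb n S"
  then have u: "u \<in> {1..2*n}" unfolding Rb_def by blast
  have "Rb n S `` {u} \<in> part n (Rb n S)" unfolding part_def using quotientI[OF u] .
  moreover have "u \<in> Rb n S `` {u}" using equiv_class_self[OF equiv_Rb u] .
  moreover have "v \<in> Rb n S `` {u}" using uv by simp
  ultimately show ?thesis by blast
qed

lemma M_box:
  assumes k: "1 \<le> i" "i < n"
  shows "pmult n (part n (Rb n S)) (bgen n i) = part n (Rb n (insert i S))"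
proof -
  define S' where "S' = insert i S"
  define lab where "lab q = Rb n S' `` {unmap n q}" for q
  have eqS': "equiv {1..2*n} (Rb n S')" by (rule equiv_Rb)
  have L1: "\<forall>B\<in>part n (Rb n S). \<forall>a\<in>B. \<forall>b\<in>B. lab (mapI n a) = lab (mapI n b)"
  proof (intro ballI)
    fix B a b assume B: "B \<in> part n (Rb n S)" and a: "a \<in> B" and b: "b \<in> B"
    obtain z where z: "z \<in> {1..2*n}" "B = Rb n S `` {z}" using B unfolding part_def by (auto elim: quotientE)
    have "(z, a) \<in> Rb n S" "(z, b) \<in> Rb n S" using a b z by auto
    then have ab: "(a, b) \<in> Rb n S'" using equiv_Rb[of n S] Rb_mono[of S S' n] unfolding equiv_def sym_def trans_def S'_def
      by blast
    have ar: "a \<in> {1..2*n}" "b \<in> {1..2*n}" using ab unfolding Rb_def by auto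
    have um: "unmap n (mapI n y) = y" if "y \<in> {1..2*n}" for y
      using that by (cases "y \<le> n") auto
    show "lab (mapI n a) = lab (mapI n b)" unfolding lab_def um[OF ar(1)] um[OF ar(2)]
      using equiv_class_eq[OF eqS' ab] .
  qed
  have cl: "Rb n S' `` {n + i} = Rb n S' `` {n + Suc i}"
  proof -
    have "(n + i, n + Suc i) \<in> Rb n S'" unfolding S'_def using Rb_step k by blast
    then show ?thesis using equiv_class_eq[OF eqS'] by blast
  qed
  have L2: "\<forall>B\<in>bgen n i. \<forall>a\<in>B. \<forall>b\<in>B. lab (mapJ n a) = lab (mapJ n b)"
  proof (intro ballI)
    fix B a b assume B: "B \<in> bgen n i" and a: "a \<in> B" and b: "b \<in> B"
    have "\<exists>L. \<forall>w\<in>B. lab (mapJ n w) = L"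
    proof -
      consider (r) j where "j \<in> {1..n}" "B = {j, n + j}"
        | (t) "B = {i, i + 1, n + i, n + (i + 1)}"
        using B unfolding bgen_def idrest_def by blast
      then show ?thesis
      proof cases
        case r
        then have "lab (mapJ n j) = Rb n S' `` {n + j}" "lab (mapJ n (n + j)) = Rb n S' `` {n + j}"
          unfolding lab_def by auto
        then show ?thesis using r(2) by auto
      next
        case t
        then have "lab (mapJ n i) = Rb n S' `` {n + i}" "lab (mapJ n (i + 1)) = Rb n S' `` {n + i}"
          "lab (mapJ n (n + i)) = Rb n S' `` {n + i}" "lab (mapJ n (n + (i + 1))) = Rb n S' `` {n + i}"
          unfolding lab_def using k cl by auto
        then show ?thesis using t by auto
      qed
    qed
    then show "lab (mapJ n a) = lab (mapJ n b)" using a b by metis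
  qed
  have L3: "\<forall>x\<in>outer n. lab x = Rb n S' `` {unmap n x}" unfolding lab_def by blast
  let ?E = "stack_edges n (part n (Rb n S)) (bgen n i)"
  have vert: "((1, j), (2, j)) \<in> ?E\<^sup>*" if j: "j \<in> {1..n}" for j
  proof -
    have "\<exists>B\<in>bgen n i. j \<in> B \<and> n + j \<in> B"
    proof (cases "j = i \<or> j = i + 1")
      case True then show ?thesis unfolding bgen_def by auto
    next
      case False then show ?thesis using j unfolding bgen_def idrest_def by blast
    qed
    then obtain B where B: "B \<in> bgen n i" "j \<in> B" "n + j \<in> B" by blast
    have "(mapJ n j, mapJ n (n + j)) \<in> ?E\<^sup>*" by (rule EJ[OF B])
    then show ?thesis using j by simp
  qed
  have topm: "((0, j), (1, j)) \<in> ?E\<^sup>*" if j: "j \<in> {1..n}" for j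
  proof -
    have "(j, n + j) \<in> Rb n S" unfolding Rb_def using j by auto
    then obtain B where B: "B \<in> part n (Rb n S)" "j \<in> B" "n + j \<in> B" using part_Rb_block by blast
    have "(mapI n j, mapI n (n + j)) \<in> ?E\<^sup>*" by (rule EI[OF B(1) B(2,3)])
    then show ?thesis using j by simp
  qed
  have mid: "(x, (1, rr n (unmap n x))) \<in> ?E\<^sup>*" if x: "x \<in> outer n" for x
  proof (rule outer_cases[OF x])
    fix j assume j: "j \<in> {1..n}" "x = (0, j)"
    then show ?thesis using topm by simp
  next
    fix j assume j: "j \<in> {1..n}" "x = (2, j)"
    then show ?thesis using vert[OF j(1)] Estar_sym by simp
  qed
  have step: "((1, j), (1, Suc j)) \<in> ?E\<^sup>*" if j: "1 \<le> j" "j < n" "j \<in> S'" for j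
  proof (cases "j = i")
    case True
    have B: "{i, i + 1, n + i, n + (i + 1)} \<in> bgen n i" unfolding bgen_def by blast
    have "(mapJ n i, mapJ n (i + 1)) \<in> ?E\<^sup>*" by (rule EJ[OF B]) auto
    then show ?thesis using True k by simp
  next
    case False
    then have "j \<in> S" using j unfolding S'_def by blast
    then have "(n + j, n + Suc j) \<in> Rb n S" using Rb_step j by blast
    then obtain B where B: "B \<in> part n (Rb n S)" "n + j \<in> B" "n + Suc j \<in> B" using part_Rb_block by blast
    have "(mapI n (n + j), mapI n (n + Suc j)) \<in> ?E\<^sup>*" by (rule EI[OF B(1) B(2,3)])
    then show ?thesis using j by simp
  qed
  have chain: "((1, j), (1, j')) \<in> ?E\<^sup>*" if j: "1 \<le> j" "j \<le> j'" "j' \<le> n" "\<forall>k. j \<le> k \<and> k < j' \<longrightarrow> k \<in> S'" for j j'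
  proof -
    define R where "R = {(u, v). ((1::nat, u), (1::nat, v)) \<in> ?E\<^sup>*}"
    have "trans R" unfolding R_def trans_def by (auto intro: rtrancl_trans)
    moreover have "\<forall>k. j \<le> k \<and> k < j' \<longrightarrow> (k, Suc k) \<in> R" unfolding R_def using step j by auto
    moreover have "(j, j) \<in> R" unfolding R_def by simp
    ultimately have "(j, j') \<in> R" using chain_rel j(2) by blast
    then show ?thesis unfolding R_def by simp
  qed
  have L4: "\<forall>x\<in>outer n. \<forall>y\<in>outer n. (unmap n x, unmap n y) \<in> Rb n S' \<longrightarrow> (x, y) \<in> ?E\<^sup>*"
  proof (intro ballI impI)
    fix x y assume x: "x \<in> outer n" and y: "y \<in> outer n" and r: "(unmap n x, unmap n y) \<in> Rb n S'"
    define u where "u = rr n (unmap n x)"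
    define v where "v = rr n (unmap n y)"
    have uv: "u \<in> {1..n}" "v \<in> {1..n}" unfolding u_def v_def using rr_range unmap_outer x y by auto
    have H: "\<forall>k. min u v \<le> k \<and> k < max u v \<longrightarrow> k \<in> S'" using r unfolding Rb_def u_def v_def by blast
    have "((1, u), (1, v)) \<in> ?E\<^sup>*"
    proof (cases "u \<le> v")
      case True then show ?thesis using chain[of u v] uv H by (auto simp: min_def max_def)
    next
      case False
      then have "((1, v), (1, u)) \<in> ?E\<^sup>*" using chain[of v u] uv H by (auto simp: min_def max_def)
      then show ?thesis using Estar_sym by blast
    qed
    moreover have "(x, (1, u)) \<in> ?E\<^sup>*" using mid[OF x] unfolding u_def .
    moreover have "((1, v), y) \<in> ?E\<^sup>*" using Estar_sym[OF mid[OF y]] unfolding v_def .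
    ultimately show "(x, y) \<in> ?E\<^sup>*" by (meson rtrancl_trans)
  qed
  have "pmult n (part n (Rb n S)) (bgen n i) = {1..2*n} // Rb n S'"
    by (rule pmult_char[OF eqS' L1 L2 L3 L4])
  then show ?thesis unfolding S'_def part_def by simp
qed

lemma Rb_sym: "(x, y) \<in> Rb n S \<Longrightarrow> (y, x) \<in> Rb n S"
  using equiv_Rb[of n S] unfolding equiv_def sym_def by blast

lemma Rb_trans: "(x, y) \<in> Rb n S \<Longrightarrow> (y, z) \<in> Rb n S \<Longrightarrow> (x, z) \<in> Rb n S"
  using equiv_Rb[of n S] unfolding equiv_def trans_def by blast

lemma Rb_refl: "x \<in> {1..2*n} \<Longrightarrow> (x, x) \<in> Rb n S"
  using equiv_Rb[of n S] unfolding equiv_def refl_on_def by blast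

lemma tau_Rb:
  assumes "k \<in> S" "1 \<le> k" "k < n" "x \<in> {1..2*n}"
  shows "(x, tau n k x) \<in> Rb n S"
proof -
  consider "x = n + k" | "x = n + Suc k" | "x \<noteq> n + k" "x \<noteq> n + Suc k" by blast
  then show ?thesis
  proof cases
    case 1 then show ?thesis using Rb_step[OF assms(1-3)] unfolding tau_def by simp
  next
    case 2 then show ?thesis using Rb_sym[OF Rb_step[OF assms(1-3)]] unfolding tau_def by simp
  next
    case 3 then show ?thesis using Rb_refl[OF assms(4)] unfolding tau_def by simp
  qed
qed

lemma compat_sw:
  assumes i: "Inv n p" and c: "Rp n p \<subseteq> Rb n S" and k: "k \<in> S" "1 \<le> k" "k < n"
  shows "Rp n (sw n k p) \<subseteq> Rb n S"
proof -
  have i': "Inv n (sw n k p)" using Inv_sw i k(2,3) .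
  have cp: "\<forall>x\<in>{1..2*n}. (x, p x) \<in> Rb n S" using compat_iff[OF i] c by blast
  have "\<forall>x\<in>{1..2*n}. (x, sw n k p x) \<in> Rb n S"
  proof
    fix x assume x: "x \<in> {1..2*n}"
    have tx: "tau n k x \<in> {1..2*n}" using tau_props(1)[OF k(2,3)] x by blast
    have ptx: "p (tau n k x) \<in> {1..2*n}" using i tx unfolding Inv_def by blast
    have "(x, tau n k x) \<in> Rb n S" using tau_Rb[OF k x] .
    moreover have "(tau n k x, p (tau n k x)) \<in> Rb n S" using cp tx by blast
    moreover have "(p (tau n k x), tau n k (p (tau n k x))) \<in> Rb n S" using tau_Rb[OF k ptx] .
    ultimately show "(x, sw n k p x) \<in> Rb n S" unfolding sw_def using Rb_trans by blast
  qed
  then show ?thesis using compat_iff[OF i'] by blast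
qed

lemma compat_tm:
  assumes i: "Inv n p" and c: "Rp n p \<subseteq> Rb n S" and k: "k \<in> S" "1 \<le> k" "k < n"
  shows "Rp n (tm n k p) \<subseteq> Rb n S"
proof -
  note F = tm_facts[OF i k(2,3)]
  have i': "Inv n (tm n k p)" using Inv_tm i k(2,3) .
  have cp: "\<forall>x\<in>{1..2*n}. (x, p x) \<in> Rb n S" using compat_iff[OF i] c by blast
  let ?c = "n + k" and ?d = "n + Suc k"
  have cd: "(?c, ?d) \<in> Rb n S" using Rb_step[OF k] .
  show ?thesis
  proof (cases "p ?c = ?d")
    case True then show ?thesis using F(5) c by simp
  next
    case False
    have "\<forall>x\<in>{1..2*n}. (x, tm n k p x) \<in> Rb n S"
    proof
      fix x assume x: "x \<in> {1..2*n}"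
      have a1: "(p ?c, ?c) \<in> Rb n S" using Rb_sym cp F(1) by blast
      have b1: "(?d, p ?d) \<in> Rb n S" using cp F(2) by blast
      consider "x = ?c" | "x = ?d" | "x = p ?c" | "x = p ?d" | "x \<notin> {?c, ?d, p ?c, p ?d}" by blast
      then show "(x, tm n k p x) \<in> Rb n S"
      proof cases
        case 1 then show ?thesis using F(3) cd by simp
      next
        case 2 then show ?thesis using F(4) Rb_sym[OF cd] by simp
      next
        case 3
        have "(p ?c, p ?d) \<in> Rb n S" using a1 cd b1 Rb_trans by blast
        then show ?thesis using 3 F(6)[OF False] by simp
      next
        case 4
        have "(p ?c, p ?d) \<in> Rb n S" using a1 cd b1 Rb_trans by blast
        then show ?thesis using 4 F(6)[OF False] Rb_sym by simp
      next
        case 5 then show ?thesis using F(8)[OF 5] cp x by simp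
      qed
    qed
    then show ?thesis using compat_iff[OF i'] by blast
  qed
qed

lemma pid_compat: "Rp n (pid n) \<subseteq> Rb n S"
proof -
  have "\<forall>x\<in>{1..2*n}. (x, pid n x) \<in> Rb n S"
  proof
    fix x assume x: "x \<in> {1..2*n}"
    have "pid n x \<in> {1..2*n}" "rr n (pid n x) = rr n x" using x unfolding pid_def rr_def by auto
    then show "(x, pid n x) \<in> Rb n S" using x unfolding Rb_def by auto
  qed
  then show ?thesis using compat_iff[OF Inv_pid2] by blast
qed

lemma BR_gens_cases:
  assumes "g \<in> BR_gens n"
  obtains i where "1 \<le> i" "i < n" "g = egen n i \<or> g = zgen n i \<or> g = dgen n i"
  using assms unfolding BR_gens_def by force

lemma BR_closed:
  assumes x: "x \<in> BR n" and g: "g \<in> BR_gens n"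
  shows "brmult n x g \<in> BR n"
proof -
  obtain p S where pS: "x = (part n (Rp n p), part n (Rb n S))" "Inv n p" "S \<subseteq> {1..<n}" "Rp n p \<subseteq> Rb n S"
    using x unfolding BR_char by blast
  obtain i where i: "1 \<le> i" "i < n" "g = egen n i \<or> g = zgen n i \<or> g = dgen n i"
    using BR_gens_cases[OF g] by blast
  define S' where "S' = insert i S"
  have S': "S' \<subseteq> {1..<n}" "i \<in> S'" "Rp n p \<subseteq> Rb n S'" unfolding S'_def using pS(3,4) i Rb_mono[of S "insert i S" n] by auto
  have J: "pmult n (part n (Rb n S)) (bgen n i) = part n (Rb n S')" unfolding S'_def using M_box[OF i(1,2)] .
  consider "g = egen n i" | "g = zgen n i" | "g = dgen n i" using i(3) by blast
  then show ?thesis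
  proof cases
    case 1
    then have "brmult n x g = (part n (Rp n p), part n (Rb n S'))"
      unfolding brmult_def egen_def pS(1) using M_idp[OF pS(2)] J by simp
    then show ?thesis unfolding BR_char using pS(2) S' by blast
  next
    case 2
    then have "brmult n x g = (part n (Rp n (sw n i p)), part n (Rb n S'))"
      unfolding brmult_def zgen_def pS(1) using M_sgen[OF pS(2) i(1,2)] J by simp
    moreover have "Inv n (sw n i p)" using Inv_sw[OF pS(2) i(1,2)] .
    moreover have "Rp n (sw n i p) \<subseteq> Rb n S'" using compat_sw[OF pS(2) S'(3) S'(2) i(1,2)] .
    ultimately show ?thesis unfolding BR_char using S' by blast
  next
    case 3
    then have "brmult n x g = (part n (Rp n (tm n i p)), part n (Rb n S'))"
      unfolding brmult_def dgen_def pS(1) using M_tm[OF pS(2) i(1,2)] J by simp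
    moreover have "Inv n (tm n i p)" using Inv_tm[OF pS(2) i(1,2)] .
    moreover have "Rp n (tm n i p) \<subseteq> Rb n S'" using compat_tm[OF pS(2) S'(3) S'(2) i(1,2)] .
    ultimately show ?thesis unfolding BR_char using S' by blast
  qed
qed

lemma idp_BR: "(idp n, idp n) \<in> BR n"
proof -
  have "(idp n, idp n) = (part n (Rp n (pid n)), part n (Rb n {}))" using idp_Rp idp_Rb by simp
  then show ?thesis unfolding BR_char using Inv_pid2 pid_compat by blast
qed

lemma gen_sub: "gen_monoid n (BR_gens n) \<subseteq> BR n"
proof
  fix x assume "x \<in> gen_monoid n (BR_gens n)"
  then show "x \<in> BR n"
  proof (induction rule: gen_monoid.induct)
    case unit then show ?case using idp_BR .
  next
    case (step x g) then show ?case using BR_closed by blast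
  qed
qed

definition reach :: "nat \<Rightarrow> nat set \<Rightarrow> (nat \<Rightarrow> nat) \<Rightarrow> bool" where
  "reach n S p \<longleftrightarrow> (part n (Rp n p), part n (Rb n S)) \<in> gen_monoid n (BR_gens n)"

definition cmp :: "nat \<Rightarrow> nat set \<Rightarrow> (nat \<Rightarrow> nat) \<Rightarrow> bool" where
  "cmp n S p \<longleftrightarrow> (\<forall>x\<in>{1..2*n}. (x, p x) \<in> Rb n S)"

lemma gens_in: "1 \<le> i \<Longrightarrow> i < n \<Longrightarrow> egen n i \<in> BR_gens n \<and> zgen n i \<in> BR_gens n \<and> dgen n i \<in> BR_gens n"
  unfolding BR_gens_def by auto

lemma Rev1:
  assumes "S \<subseteq> {1..<n}"
  shows "(idp n, part n (Rb n S)) \<in> gen_monoid n (BR_gens n)"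
proof -
  have fin: "finite S" using assms finite_subset by blast
  show ?thesis using fin assms
  proof (induction S rule: finite_induct)
    case empty
    then show ?case using gen_monoid.unit[of n "BR_gens n"] idp_Rb[of n] by simp
  next
    case (insert i F)
    then have IH: "(idp n, part n (Rb n F)) \<in> gen_monoid n (BR_gens n)" and i: "1 \<le> i" "i < n" by auto
    have "brmult n (idp n, part n (Rb n F)) (egen n i) \<in> gen_monoid n (BR_gens n)"
      using gen_monoid.step[OF IH] gens_in[OF i] by blast
    moreover have "pmult n (idp n) (idp n) = idp n" using M_idp[OF Inv_pid2, of n] idp_Rp[of n] by simp
    ultimately show ?case unfolding brmult_def egen_def using M_box[OF i, of F] by simp
  qed
qed

lemma reach_sw:
  assumes r: "reach n S p" and i: "Inv n p" and k: "k \<in> S" "1 \<le> k" "k < n"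
  shows "reach n S (sw n k p)"
proof -
  have "brmult n (part n (Rp n p), part n (Rb n S)) (zgen n k) \<in> gen_monoid n (BR_gens n)"
    using gen_monoid.step[OF r[unfolded reach_def]] gens_in[OF k(2,3)] by blast
  moreover have "insert k S = S" using k by blast
  ultimately show ?thesis unfolding reach_def brmult_def zgen_def using M_sgen[OF i k(2,3)] M_box[OF k(2,3), of S] by simp
qed

lemma reach_tm:
  assumes r: "reach n S p" and i: "Inv n p" and k: "k \<in> S" "1 \<le> k" "k < n"
  shows "reach n S (tm n k p)"
proof -
  have "brmult n (part n (Rp n p), part n (Rb n S)) (dgen n k) \<in> gen_monoid n (BR_gens n)"
    using gen_monoid.step[OF r[unfolded reach_def]] gens_in[OF k(2,3)] by blast
  moreover have "insert k S = S" using k by blast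
  ultimately show ?thesis unfolding reach_def brmult_def dgen_def using M_tm[OF i k(2,3)] M_box[OF k(2,3), of S] by simp
qed

lemma Rp_cong: "(\<forall>x\<in>{1..2*n}. p x = q x) \<Longrightarrow> Rp n p = Rp n q"
  unfolding Rp_def by auto

lemma reach_id:
  assumes "S \<subseteq> {1..<n}" and "\<forall>x\<in>{1..2*n}. p x = pid n x"
  shows "reach n S p"
  unfolding reach_def using Rev1[OF assms(1)] Rp_cong[OF assms(2)] idp_Rp[of n] by simp

lemma cmp_iff: "Inv n p \<Longrightarrow> cmp n S p \<longleftrightarrow> Rp n p \<subseteq> Rb n S"
  unfolding cmp_def using compat_iff by blast

definition wt :: "nat \<Rightarrow> (nat \<Rightarrow> nat) \<Rightarrow> nat" where
  "wt n p = nat (\<Sum>j\<in>{1..n}. (int (p (n + j)) - int j)^2)"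

lemma Inv_inj: "Inv n p \<Longrightarrow> x \<in> {1..2*n} \<Longrightarrow> y \<in> {1..2*n} \<Longrightarrow> p x = p y \<Longrightarrow> x = y"
  unfolding Inv_def by metis

lemma no_top_pairs:
  assumes i: "Inv n p" and h: "\<forall>x\<in>{n+1..2*n}. p x \<le> n"
  shows "\<forall>a\<in>{1..n}. n < p a"
proof
  fix a assume a: "a \<in> {1..n}"
  have sub: "p ` {n+1..2*n} \<subseteq> {1..n}"
  proof
    fix z assume "z \<in> p ` {n+1..2*n}"
    then obtain x where x: "x \<in> {n+1..2*n}" "z = p x" by blast
    then have "x \<in> {1..2*n}" by auto
    then have "1 \<le> p x" using i unfolding Inv_def by auto
    then show "z \<in> {1..n}" using h x by auto
  qed
  have inj: "inj_on p {n+1..2*n}"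
    unfolding inj_on_def using Inv_inj[OF i] by auto
  have "card (p ` {n+1..2*n}) = card {n+1..2*n}" using card_image[OF inj] .
  also have "\<dots> = card {1..n}" by simp
  finally have "p ` {n+1..2*n} = {1..n}" using card_subset_eq[OF _ sub] by simp
  then obtain y where y: "y \<in> {n+1..2*n}" "a = p y" using a by (metis imageE)
  then have "y \<in> {1..2*n}" by auto
  then have "p a = y" using i y(2) unfolding Inv_def by auto
  then show "n < p a" using y by auto
qed

lemma descent:
  assumes i: "Inv n p" and c: "cmp n S p" and h: "\<forall>x\<in>{n+1..2*n}. p x \<le> n"
    and nid: "\<not> (\<forall>j\<in>{1..n}. p (n + j) = j)"
  shows "\<exists>k. k \<in> S \<and> 1 \<le> k \<and> k < n \<and> p (n + Suc k) < p (n + k)"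
proof -
  define P where "P j \<longleftrightarrow> j \<in> {1..n} \<and> p (n + j) \<noteq> j" for j
  have "\<exists>j. P j" using nid unfolding P_def by blast
  then obtain j where Pj: "P j" and minj: "\<forall>i<j. \<not> P i" using exists_least_iff[of P] by blast
  have j: "j \<in> {1..n}" "p (n + j) \<noteq> j" using Pj unfolding P_def by auto
  have pit: "p (n + i) \<in> {1..n}" if "i \<in> {1..n}" for i
  proof -
    have "n + i \<in> {1..2*n}" "n + i \<in> {n+1..2*n}" using that by auto
    then show ?thesis using i h unfolding Inv_def by force
  qed
  have fix_below: "p (n + i) = i" if "i \<in> {1..n}" "i < j" for i
    using minj that unfolding P_def by blast
  have gt: "j < p (n + j)"
  proof (rule ccontr)
    assume "\<not> j < p (n + j)"
    then have lt: "p (n + j) < j" using j by simp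
    have pj: "p (n + j) \<in> {1..n}" using pit[OF j(1)] .
    have e: "p (n + p (n + j)) = p (n + j)" using fix_below[OF pj lt] .
    have r1: "n + p (n + j) \<in> {1..2*n}" "n + j \<in> {1..2*n}" using pj j(1) by auto
    have "n + p (n + j) = n + j" using Inv_inj[OF i r1(1) r1(2) e] .
    then show False using j by simp
  qed
  have ntp: "n < p j" using no_top_pairs[OF i h] j(1) by blast
  have pjr: "p j \<in> {1..2*n}" using i j(1) unfolding Inv_def by auto
  define j' where "j' = p j - n"
  have j'r: "j' \<in> {1..n}" "p j = n + j'" using ntp pjr unfolding j'_def by auto
  have "p (p j) = j" using i j(1) unfolding Inv_def by auto
  then have pj': "p (n + j') = j" using j'r(2) by simp
  have "j' \<noteq> j" using pj' j(2) by auto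
  moreover have "\<not> j' < j" using fix_below[OF j'r(1)] pj' \<open>j' \<noteq> j\<close> by auto
  ultimately have jj': "j < j'" by simp
  have "(j, p j) \<in> Rb n S" using c j(1) unfolding cmp_def by auto
  then have inS: "\<forall>k. j \<le> k \<and> k < j' \<longrightarrow> k \<in> S"
    using j(1) j'r jj' unfolding Rb_def by (auto simp: min_def max_def)
  have "\<exists>k. j \<le> k \<and> k < j' \<and> p (n + Suc k) < p (n + k)"
  proof (rule ccontr)
    assume "\<not> ?thesis"
    then have st: "\<forall>k. j \<le> k \<and> k < j' \<longrightarrow> (k, Suc k) \<in> {(a, b). p (n + a) \<le> p (n + b)}" by auto
    have "trans {(a, b). p (n + a) \<le> p (n + b)}" unfolding trans_def by auto
    then have "(j, j') \<in> {(a, b). p (n + a) \<le> p (n + b)}" using chain_rel st jj' by fastforce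
    then show False using gt pj' by simp
  qed
  then obtain k where k: "j \<le> k" "k < j'" "p (n + Suc k) < p (n + k)" by blast
  then show ?thesis using inS j(1) j'r(1) by (intro exI[of _ k]) auto
qed

lemma wt_sw:
  assumes i: "Inv n p" and h: "\<forall>x\<in>{n+1..2*n}. p x \<le> n" and k: "1 \<le> k" "k < n"
    and desc: "p (n + Suc k) < p (n + k)"
  shows "wt n (sw n k p) < wt n p"
proof -
  define g where "g j = (int (p (n + j)) - int j)^2" for j
  define g' where "g' j = (int (sw n k p (n + j)) - int j)^2" for j
  have topv: "p (n + j) \<le> n" if "j \<in> {1..n}" for j using h that by auto
  have eqr: "g' j = g j" if "j \<in> {1..n} - {k} - {Suc k}" for j
  proof -
    have "tau n k (n + j) = n + j" using that unfolding tau_def by auto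
    moreover have "tau n k (p (n + j)) = p (n + j)" using topv[of j] that tau_props(2)[OF k] by auto
    ultimately show ?thesis unfolding g_def g'_def sw_def by simp
  qed
  have vk: "sw n k p (n + k) = p (n + Suc k)"
    using topv[of "Suc k"] k tau_props(2)[OF k] unfolding sw_def by (simp add: tau_def)
  have vk1: "sw n k p (n + Suc k) = p (n + k)"
    using topv[of k] k tau_props(2)[OF k] unfolding sw_def by (simp add: tau_def)
  have fin: "finite ({1..n} - {k})" by simp
  have mem: "k \<in> {1..n}" "Suc k \<in> {1..n} - {k}" using k by auto
  have split: "sum f {1..n} = f k + f (Suc k) + sum f ({1..n} - {k} - {Suc k})" for f :: "nat \<Rightarrow> int"
    using sum.remove[OF _ mem(1), of f] sum.remove[OF fin mem(2), of f] by simp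
  have rest: "sum g' ({1..n} - {k} - {Suc k}) = sum g ({1..n} - {k} - {Suc k})"
    using eqr by (rule sum.cong[OF refl])
  define A where "A = int (p (n + k))"
  define B where "B = int (p (n + Suc k))"
  have AB: "B < A" using desc unfolding A_def B_def by simp
  have "g k + g (Suc k) - (g' k + g' (Suc k)) = 2 * (A - B)"
    unfolding g_def g'_def vk vk1 A_def[symmetric] B_def[symmetric]
    by (simp add: power2_eq_square algebra_simps)
  then have lt: "sum g' {1..n} < sum g {1..n}" using split[of g] split[of g'] rest AB by simp
  have nn: "0 \<le> sum g' {1..n}" unfolding g'_def by (simp add: sum_nonneg)
  show ?thesis unfolding wt_def using lt nn unfolding g_def g'_def by simp
qed

lemma sw_sw: "sw n k (sw n k p) = p"
  unfolding sw_def by (rule ext) simp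

lemma perm_case:
  assumes S: "S \<subseteq> {1..<n}"
  shows "Inv n p \<Longrightarrow> cmp n S p \<Longrightarrow> \<forall>x\<in>{n+1..2*n}. p x \<le> n \<Longrightarrow> reach n S p"
proof (induction "wt n p" arbitrary: p rule: less_induct)
  case less
  note i = less.prems(1) and c = less.prems(2) and h = less.prems(3)
  show ?case
  proof (cases "\<forall>j\<in>{1..n}. p (n + j) = j")
    case True
    have "\<forall>x\<in>{1..2*n}. p x = pid n x"
    proof
      fix x assume x: "x \<in> {1..2*n}"
      show "p x = pid n x"
      proof (cases "x \<le> n")
        case xt: True
        then have "p (n + x) = x" using True x by auto
        moreover have "n + x \<in> {1..2*n}" using x xt by auto
        ultimately have "p x = n + x" using i unfolding Inv_def by metis
        then show ?thesis using xt unfolding pid_def by simp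
      next
        case xb: False
        have "x - n \<in> {1..n}" using xb x by auto
        then have "p (n + (x - n)) = x - n" using True by blast
        moreover have "n + (x - n) = x" using xb by simp
        ultimately show ?thesis using xb unfolding pid_def by simp
      qed
    qed
    then show ?thesis using reach_id[OF S] by blast
  next
    case False
    obtain k where k: "k \<in> S" "1 \<le> k" "k < n" "p (n + Suc k) < p (n + k)"
      using descent[OF i c h False] by blast
    define p' where "p' = sw n k p"
    have i': "Inv n p'" unfolding p'_def using Inv_sw[OF i k(2,3)] .
    have c': "cmp n S p'" unfolding p'_def using compat_sw[OF i _ k(1-3)] cmp_iff[OF i] cmp_iff[OF Inv_sw[OF i k(2,3)]] c by blast
    have h': "\<forall>x\<in>{n+1..2*n}. p' x \<le> n"
    proof
      fix x assume x: "x \<in> {n+1..2*n}"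
      have x1: "x \<in> {1..2*n}" "n < x" using x by auto
      have "tau n k x \<in> {1..2*n}" "n < tau n k x" using x1 tau_props(1,3)[OF k(2,3)] by blast+
      then have "tau n k x \<in> {n+1..2*n}" by auto
      then have "p (tau n k x) \<le> n" using h by blast
      then show "p' x \<le> n" unfolding p'_def sw_def using tau_props(2)[OF k(2,3)] by simp
    qed
    have "wt n p' < wt n p" unfolding p'_def using wt_sw[OF i h k(2,3,4)] .
    then have "reach n S p'" using less.hyps i' c' h' by blast
    then have "reach n S (sw n k p')" using reach_sw[OF _ i' k(1-3)] by blast
    then show ?thesis unfolding p'_def sw_sw .
  qed
qed

definition bp :: "nat \<Rightarrow> (nat \<Rightarrow> nat) \<Rightarrow> nat set" where
  "bp n p = {x \<in> {n+1..2*n}. n < p x}"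

lemma box_toppair:
  assumes i: "Inv n p" and c: "cmp n S p" and cr: "1 \<le> c" "c < n" and pc: "p (n + c) = n + Suc c"
  shows "\<exists>a. a \<in> {1..n} \<and> p a \<in> {1..n} \<and> (a, n + c) \<in> Rb n S"
proof (rule ccontr)
  assume na: "\<not> ?thesis"
  define B where "B = Rb n S `` {n + c}"
  define T where "T = B \<inter> {1..n}"
  define Bot where "Bot = B \<inter> {n+1..2*n}"
  have Cr: "n + c \<in> {1..2*n}" using cr by auto
  have BotT: "Bot = (\<lambda>j. n + j) ` T"
  proof
    show "Bot \<subseteq> (\<lambda>j. n + j) ` T"
    proof
      fix y assume y: "y \<in> Bot"
      then have y1: "(n + c, y) \<in> Rb n S" "y \<in> {n+1..2*n}" unfolding Bot_def B_def by auto
      have "y \<in> {1..2*n}" using y1 by auto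
      then have "(y, rr n y) \<in> Rb n S" by (rule Rb_rr)
      moreover have "rr n y = y - n" using y1 unfolding rr_def by auto
      ultimately have "(n + c, y - n) \<in> Rb n S" using y1 Rb_trans by metis
      then have "y - n \<in> T" using y1 unfolding T_def B_def by auto
      moreover have "y = n + (y - n)" using y1 by auto
      ultimately show "y \<in> (\<lambda>j. n + j) ` T" by blast
    qed
    show "(\<lambda>j. n + j) ` T \<subseteq> Bot"
    proof
      fix y assume "y \<in> (\<lambda>j. n + j) ` T"
      then obtain j where j: "j \<in> T" "y = n + j" by blast
      then have j1: "(n + c, j) \<in> Rb n S" "j \<in> {1..n}" unfolding T_def B_def by auto
      have "n + j \<in> {1..2*n}" using j1 by auto
      then have "(n + j, rr n (n + j)) \<in> Rb n S" by (rule Rb_rr)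
      moreover have "rr n (n + j) = j" using j1 by simp
      ultimately have "(n + c, n + j) \<in> Rb n S" using j1 Rb_trans Rb_sym by metis
      then show "y \<in> Bot" using j j1 unfolding Bot_def B_def by auto
    qed
  qed
  have finT: "finite T" unfolding T_def by simp
  have cardeq: "card Bot = card T" unfolding BotT by (rule card_image) (simp add: inj_on_def)
  have sub: "p ` T \<subseteq> Bot"
  proof
    fix z assume "z \<in> p ` T"
    then obtain a where a: "a \<in> T" "z = p a" by blast
    then have a1: "a \<in> {1..n}" "(n + c, a) \<in> Rb n S" unfolding T_def B_def by auto
    have ar: "a \<in> {1..2*n}" using a1 by auto
    have pa: "p a \<in> {1..2*n}" using i ar unfolding Inv_def by blast
    have "p a \<notin> {1..n}" using na a1 Rb_sym by blast
    then have pab: "p a \<in> {n+1..2*n}" using pa by auto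
    have "(a, p a) \<in> Rb n S" using c ar unfolding cmp_def by blast
    then have "(n + c, p a) \<in> Rb n S" using a1 Rb_trans by blast
    then show "z \<in> Bot" using a pab unfolding Bot_def B_def by auto
  qed
  have inj: "inj_on p T"
    unfolding inj_on_def T_def using Inv_inj[OF i] by auto
  have "card (p ` T) = card Bot" using card_image[OF inj] cardeq by simp
  then have eq: "p ` T = Bot" using card_subset_eq[OF _ sub] finite_imageI[OF finT] unfolding BotT
    using finT by simp
  have "n + c \<in> Bot" unfolding Bot_def B_def using Rb_refl[OF Cr] cr by auto
  then obtain a where a: "a \<in> T" "n + c = p a" using eq by blast
  then have "a \<in> {1..2*n}" "a \<le> n" unfolding T_def by auto
  then have "p (n + c) = a" using a(2) i unfolding Inv_def by auto
  then show False using pc \<open>a \<le> n\<close> by simp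
qed

lemma zero_step:
  assumes i: "Inv n p" and c: "cmp n S p" and cr: "1 \<le> c" "c < n" and pc: "p (n + c) = n + Suc c"
    and IH: "\<forall>q. Inv n q \<and> cmp n S q \<and> card (bp n q) < card (bp n p) \<longrightarrow> reach n S q"
  shows "reach n S p"
proof -
  obtain a where a: "a \<in> {1..n}" "p a \<in> {1..n}" "(a, n + c) \<in> Rb n S"
    using box_toppair[OF i c cr pc] by blast
  define b where "b = p a"
  define C where "C = n + c"
  define D where "D = n + Suc c"
  have ar: "a \<in> {1..2*n}" and br: "b \<in> {1..2*n}" "b \<le> n" using a unfolding b_def by auto
  have Cr: "C \<in> {1..2*n}" "n < C" and Dr: "D \<in> {1..2*n}" "n < D" unfolding C_def D_def using cr by auto
  have ia: "p (p a) = a" "p a \<noteq> a" using i ar unfolding Inv_def by auto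
  have pa: "p a = b" and pb: "p b = a" and ab: "a \<noteq> b" using ia unfolding b_def by auto
  have pC: "p C = D" using pc unfolding C_def D_def .
  have "p (p C) = C" using i Cr unfolding Inv_def by blast
  then have pD: "p D = C" using pC by simp
  have CD: "C \<noteq> D" unfolding C_def D_def by simp
  have dist: "a \<noteq> C" "a \<noteq> D" "b \<noteq> C" "b \<noteq> D" using a br Cr Dr by auto
  define p' where "p' = p(a := C, C := a, b := D, D := b)"
  have v: "p' a = C" "p' C = a" "p' b = D" "p' D = b" unfolding p'_def using dist ab CD by auto
  have vo: "p' x = p x" if "x \<notin> {a, b, C, D}" for x unfolding p'_def using that by auto
  have po: "p x \<notin> {a, b, C, D}" if "x \<notin> {a, b, C, D}" "x \<in> {1..2*n}" for x
  proof -
    have "p (p x) = x" using i that(2) unfolding Inv_def by blast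
    then show ?thesis using that pa pb pC pD by auto
  qed
  have i': "Inv n p'" unfolding Inv_def
  proof
    fix x assume x: "x \<in> {1..2*n}"
    show "p' x \<in> {1..2*n} \<and> p' x \<noteq> x \<and> p' (p' x) = x"
    proof (cases "x \<in> {a, b, C, D}")
      case True then show ?thesis using v ar br Cr Dr dist ab CD by auto
    next
      case False
      then show ?thesis using vo[OF False] vo[OF po[OF False x]] i x unfolding Inv_def by auto
    qed
  qed
  have cp: "\<forall>x\<in>{1..2*n}. (x, p x) \<in> Rb n S" using c unfolding cmp_def .
  have aC: "(a, C) \<in> Rb n S" using a(3) unfolding C_def .
  have bD: "(b, D) \<in> Rb n S"
  proof -
    have "(b, a) \<in> Rb n S" using cp ar Rb_sym pa by metis
    moreover have "(C, D) \<in> Rb n S" using cp Cr pC by metis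
    ultimately show ?thesis using aC Rb_trans by metis
  qed
  have c': "cmp n S p'" unfolding cmp_def
  proof
    fix x assume x: "x \<in> {1..2*n}"
    consider "x = a" | "x = b" | "x = C" | "x = D" | "x \<notin> {a, b, C, D}" by blast
    then show "(x, p' x) \<in> Rb n S"
    proof cases
      case 1 then show ?thesis using v aC by simp
    next
      case 2 then show ?thesis using v bD by simp
    next
      case 3 then show ?thesis using v Rb_sym[OF aC] by simp
    next
      case 4 then show ?thesis using v Rb_sym[OF bD] by simp
    qed (use vo cp x in auto)
  qed
  have cS: "c \<in> S"
  proof -
    have "(C, D) \<in> Rb n S" using cp Cr pC by metis
    moreover have "rr n C = c" "rr n D = Suc c" unfolding C_def D_def rr_def using cr by auto
    ultimately show ?thesis unfolding Rb_def by auto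
  qed
  have bsub: "bp n p' \<subseteq> bp n p - {C}"
  proof
    fix x assume x: "x \<in> bp n p'"
    then have x1: "x \<in> {n+1..2*n}" "n < p' x" unfolding bp_def by auto
    have "x \<noteq> C" "x \<noteq> D" using x1 v a br by auto
    moreover have "x \<noteq> a" "x \<noteq> b" using x1 a br by auto
    ultimately have "p' x = p x" using vo by auto
    then show "x \<in> bp n p - {C}" using x1 \<open>x \<noteq> C\<close> unfolding bp_def by auto
  qed
  have Cin: "C \<in> bp n p" unfolding bp_def using Cr pC Dr by auto
  have "card (bp n p') < card (bp n p)"
  proof -
    have "bp n p' \<subset> bp n p" using bsub Cin by blast
    moreover have "finite (bp n p)" unfolding bp_def by simp
    ultimately show ?thesis by (rule psubset_card_mono[rotated])
  qed
  then have r': "reach n S p'" using IH i' c' by blast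
  have "tm n c p' = p"
  proof -
    have e1: "p' (n + c) = a" "p' (n + Suc c) = b" using v unfolding C_def D_def by auto
    have "a \<noteq> n + Suc c" using dist(2) unfolding D_def .
    then have "tm n c p' = p'(C := D, D := C, a := b, b := a)"
      unfolding tm_def Let_def e1 C_def D_def by simp
    also have "\<dots> = p"
    proof (rule ext)
      fix x
      show "(p'(C := D, D := C, a := b, b := a)) x = p x"
        using vo[of x] pa pb pC pD by (cases "x \<in> {a, b, C, D}") auto
    qed
    finally show ?thesis .
  qed
  then show ?thesis using reach_tm[OF r' i' cS cr] by simp
qed

lemma tau_gt: "1 \<le> k \<Longrightarrow> k < n \<Longrightarrow> y \<in> {1..2*n} \<Longrightarrow> n < tau n k y \<longleftrightarrow> n < y"
  unfolding tau_def by auto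

lemma bp_sw:
  assumes i: "Inv n p" and k: "1 \<le> k" "k < n"
  shows "card (bp n (sw n k p)) = card (bp n p)"
proof -
  have eq: "bp n (sw n k p) = tau n k ` bp n p"
  proof
    show "bp n (sw n k p) \<subseteq> tau n k ` bp n p"
    proof
      fix x assume x: "x \<in> bp n (sw n k p)"
      then have x1: "x \<in> {n+1..2*n}" "n < tau n k (p (tau n k x))" unfolding bp_def sw_def by auto
      have xr: "x \<in> {1..2*n}" using x1 by auto
      have tx: "tau n k x \<in> {1..2*n}" "n < tau n k x" using tau_props(1)[OF k] tau_gt[OF k xr] xr x1 by auto
      have "p (tau n k x) \<in> {1..2*n}" using i tx unfolding Inv_def by blast
      then have "n < p (tau n k x)" using tau_gt[OF k] x1 by blast
      then have "tau n k x \<in> bp n p" unfolding bp_def using tx by auto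
      then show "x \<in> tau n k ` bp n p" using tau_tau[of n k x] by (metis imageI)
    qed
    show "tau n k ` bp n p \<subseteq> bp n (sw n k p)"
    proof
      fix y assume "y \<in> tau n k ` bp n p"
      then obtain x where x: "x \<in> bp n p" "y = tau n k x" by blast
      then have x1: "x \<in> {n+1..2*n}" "n < p x" unfolding bp_def by auto
      have xr: "x \<in> {1..2*n}" using x1 by auto
      have yr: "y \<in> {1..2*n}" "n < y" using tau_props(1)[OF k] tau_gt[OF k xr] xr x1 x(2) by auto
      have "p x \<in> {1..2*n}" using i xr unfolding Inv_def by blast
      then have "n < tau n k (p x)" using tau_gt[OF k] x1 by blast
      then have "n < sw n k p y" unfolding sw_def x(2) by simp
      then show "y \<in> bp n (sw n k p)" unfolding bp_def using yr by auto
    qed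
  qed
  have "inj_on (tau n k) (bp n p)" unfolding inj_on_def by (metis tau_tau)
  then show ?thesis unfolding eq by (rule card_image)
qed

lemma bottom_case:
  assumes IH: "\<forall>q. Inv n q \<and> cmp n S q \<and> card (bp n q) < h \<longrightarrow> reach n S q"
  shows "\<forall>p c. Inv n p \<and> cmp n S p \<and> card (bp n p) = h \<and> 1 \<le> c \<and> c + m + 1 \<le> n \<and>
           p (n + c) = n + c + m + 1 \<longrightarrow> reach n S p"
proof (induction m)
  case 0
  show ?case
  proof (intro allI impI)
    fix p c assume a: "Inv n p \<and> cmp n S p \<and> card (bp n p) = h \<and> 1 \<le> c \<and> c + 0 + 1 \<le> n \<and> p (n + c) = n + c + 0 + 1"
    show "reach n S p"
      by (rule zero_step) (use a IH in auto)
  qed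
next
  case (Suc m)
  show ?case
  proof (intro allI impI)
    fix p c assume a: "Inv n p \<and> cmp n S p \<and> card (bp n p) = h \<and> 1 \<le> c \<and> c + Suc m + 1 \<le> n \<and>
           p (n + c) = n + c + Suc m + 1"
    then have i: "Inv n p" and cp: "cmp n S p" and h: "card (bp n p) = h" and c1: "1 \<le> c"
      and cm: "c + Suc m + 1 \<le> n" and pc: "p (n + c) = n + c + Suc m + 1" by auto
    define k where "k = c + m + 1"
    have k: "1 \<le> k" "k < n" unfolding k_def using c1 cm by auto
    have Cr: "n + c \<in> {1..2*n}" using c1 cm by auto
    have "(n + c, p (n + c)) \<in> Rb n S" using cp Cr unfolding cmp_def by blast
    moreover have "rr n (n + c) = c" "rr n (p (n + c)) = Suc k" using c1 unfolding pc k_def rr_def by auto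
    ultimately have kS: "k \<in> S" unfolding Rb_def k_def by auto
    define p' where "p' = sw n k p"
    have i': "Inv n p'" unfolding p'_def using Inv_sw[OF i k] .
    have c': "cmp n S p'" unfolding p'_def
      using compat_sw[OF i _ kS k] cmp_iff[OF i] cmp_iff[OF Inv_sw[OF i k]] cp by blast
    have h': "card (bp n p') = h" unfolding p'_def using bp_sw[OF i k] h by simp
    have t: "tau n k (n + c) = n + c" unfolding tau_def k_def by simp
    have pc': "p (n + c) = n + Suc k" using pc unfolding k_def by simp
    have "p' (n + c) = tau n k (n + Suc k)" unfolding p'_def sw_def t pc' by simp
    also have "\<dots> = n + c + m + 1" unfolding tau_def k_def by simp
    finally have pc2: "p' (n + c) = n + c + m + 1" .
    have "reach n S p'" by (rule Suc.IH[rule_format, of p' c]) (use i' c' h' c1 cm pc2 in auto)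
    then have "reach n S (sw n k p')" using reach_sw[OF _ i' kS k] by blast
    then show "reach n S p" unfolding p'_def sw_sw .
  qed
qed

lemma core:
  assumes S: "S \<subseteq> {1..<n}"
  shows "Inv n p \<Longrightarrow> cmp n S p \<Longrightarrow> reach n S p"
proof (induction "card (bp n p)" arbitrary: p rule: less_induct)
  case less
  note i = less.prems(1) and cp = less.prems(2)
  have IH: "\<forall>q. Inv n q \<and> cmp n S q \<and> card (bp n q) < card (bp n p) \<longrightarrow> reach n S q"
    using less.hyps by blast
  show ?case
  proof (cases "bp n p = {}")
    case True
    then have "\<forall>x\<in>{n+1..2*n}. p x \<le> n" unfolding bp_def by auto
    then show ?thesis using perm_case[OF S i cp] by blast
  next
    case False
    then obtain x where x: "x \<in> {n+1..2*n}" "n < p x" unfolding bp_def by auto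
    have xr: "x \<in> {1..2*n}" using x by auto
    have px: "p x \<in> {1..2*n}" "p x \<noteq> x" "p (p x) = x" using i xr unfolding Inv_def by auto
    define c0 where "c0 = x - n"
    define d0 where "d0 = p x - n"
    have c0: "x = n + c0" "1 \<le> c0" "c0 \<le> n" unfolding c0_def using x by auto
    have d0: "p x = n + d0" "1 \<le> d0" "d0 \<le> n" unfolding d0_def using x px by auto
    have ne: "c0 \<noteq> d0" using px(2) c0 d0 by auto
    show ?thesis
    proof (cases "c0 < d0")
      case True
      have "p (n + c0) = n + c0 + (d0 - c0 - 1) + 1" using d0 c0 True by auto
      moreover have "c0 + (d0 - c0 - 1) + 1 \<le> n" using True d0 by auto
      ultimately show ?thesis using bottom_case[OF IH, of "d0 - c0 - 1"] i cp c0 by blast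
    next
      case False
      then have lt: "d0 < c0" using ne by simp
      have "p (n + d0) = x" using px(3) d0(1) by simp
      then have "p (n + d0) = n + d0 + (c0 - d0 - 1) + 1" using c0 lt by auto
      moreover have "d0 + (c0 - d0 - 1) + 1 \<le> n" using lt c0 by auto
      ultimately show ?thesis using bottom_case[OF IH, of "c0 - d0 - 1"] i cp d0 by blast
    qed
  qed
qed

theorem proposition6p10:
  fixes n :: nat
  shows "gen_monoid n (BR_gens n) = BR n"
proof
  show "gen_monoid n (BR_gens n) \<subseteq> BR n" by (rule gen_sub)
  show "BR n \<subseteq> gen_monoid n (BR_gens n)"
  proof
    fix x assume "x \<in> BR n"
    then obtain p S where pS: "x = (part n (Rp n p), part n (Rb n S))" "Inv n p" "S \<subseteq> {1..<n}" "Rp n p \<subseteq> Rb n S"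
      unfolding BR_char by blast
    have "reach n S p" using core[OF pS(3) pS(2)] cmp_iff[OF pS(2)] pS(4) by blast
    then show "x \<in> gen_monoid n (BR_gens n)" unfolding reach_def pS(1) .
  qed
qed

end
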